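(* Let $\mathcal E^{(-1)}=0$ and, for $q\in\mathbb Z_+$, $\mathcal E^{(q)}=\{X\in\mathfrak D_V\mid [D_\mu,X]\in\mathcal E^{(q-1)},\ \mu=1,\dots,m\}$. Then for every $q\in\mathbb Z_+$, $$\mathcal E^{(q)}=\bigoplus_{k\in\mathsf I,\ |k|\le q}\mathcal E^k,\qquad \mathcal E^k=\Big\{\sum_{\alpha,i}(\varepsilon^k_\phi)^\alpha_i\,\partial_{u^\alpha_i}\ \Big|\ \phi\in\mathcal A^{\mathsf A}\Big\};$$ that is, a vertical differentiation $X=\sum\zeta^\alpha_i\partial_{u^\alpha_i}$ lies in $\mathcal E^{(q)}$ if and only if $\zeta=\sum_{|k|\le q}\varepsilon^k_{\phi_k}$ for some $\phi_k\in\mathcal A^{\mathsf A}$, and these $\phi_k$ are unique.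
   Context: $\mathbb F\in\{\mathbb R,\mathbb C\}$, $m\in\mathbb N$, $\mathsf A$ a finite index set, $\mathsf I=\mathbb Z_+^m$, $|k|=k^1+\dots+k^m$, $k\le i$ componentwise, $\binom{i}{k}=\prod_\mu\binom{i^\mu}{k^\mu}$, $(\mu)$ the multi-index with $1$ in position $\mu$. Variables $x^\mu$ on $\mathbb R^m$ and $u^\alpha_i$ ($\alpha\in\mathsf A$, $i\in\mathsf I$); $\mathcal A$ is the algebra of smooth $\mathbb F$-valued functions each depending on finitely many of these variables. $D_\mu=\partial_{x^\mu}+\sum_{\alpha,i}u^\alpha_{i+(\mu)}\partial_{u^\alpha_i}$, $D_j=D_1^{j^1}\cdots D_m^{j^m}$. $\mathfrak D_V$ is the space of vertical differentiations $X=\sum_{\alpha,i}\zeta^\alpha_i\partial_{u^\alpha_i}$ with arbitrary coefficients $\zeta^\alpha_i\in\mathcal A$ (each acts on $f\in\mathcal A$ as a finite sum); one has $[D_\mu,X]=\sum(D_\mu\zeta^\alpha_i-\zeta^\alpha_{i+(\mu)})\partial_{u^\alpha_i}$. For $k\in\mathsf I$, $\phi=(\phi^\alpha)\in\mathcal A^{\mathsf A}$: $(\varepsilon^k_\phi)^\alpha_i=\binom{i}{k}D_{i-k}\phi^\alpha$ if $k\le i$ and $0$ otherwise. *)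

theory Defs
  imports "HOL-Analysis.Analysis"
begin

(* Coordinates of the jet space: x^mu (mu < m) and u^alpha_i (alpha in 'a, i a multi-index).
   Multi-indices are functions nat => nat vanishing outside {..<m}; position mu = 0..m-1. *)
datatype 'a jvar = Xv nat | Uv 'a "nat \<Rightarrow> nat"

definition multi_idx :: "nat \<Rightarrow> (nat \<Rightarrow> nat) set" where
  "multi_idx m = {i. \<forall>\<mu>. m \<le> \<mu> \<longrightarrow> i \<mu> = 0}"

definition valid_var :: "nat \<Rightarrow> 'a jvar \<Rightarrow> bool" where
  "valid_var m v = (case v of Xv \<mu> \<Rightarrow> \<mu> < m | Uv \<alpha> i \<Rightarrow> i \<in> multi_idx m)"

definition mabs :: "nat \<Rightarrow> (nat \<Rightarrow> nat) \<Rightarrow> nat" where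
  "mabs m k = (\<Sum>\<mu><m. k \<mu>)"

definition mle :: "nat \<Rightarrow> (nat \<Rightarrow> nat) \<Rightarrow> (nat \<Rightarrow> nat) \<Rightarrow> bool" where
  "mle m k i = (\<forall>\<mu><m. k \<mu> \<le> i \<mu>)"

definition mchoose :: "nat \<Rightarrow> (nat \<Rightarrow> nat) \<Rightarrow> (nat \<Rightarrow> nat) \<Rightarrow> nat" where
  "mchoose m i k = (\<Prod>\<mu><m. i \<mu> choose k \<mu>)"

definition msub :: "(nat \<Rightarrow> nat) \<Rightarrow> (nat \<Rightarrow> nat) \<Rightarrow> (nat \<Rightarrow> nat)" where
  "msub i k = (\<lambda>\<mu>. i \<mu> - k \<mu>)"

definition incr :: "(nat \<Rightarrow> nat) \<Rightarrow> nat \<Rightarrow> (nat \<Rightarrow> nat)" where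
  "incr i \<mu> = i(\<mu> := Suc (i \<mu>))"

type_synonym ('a, 'f) fn = "('a jvar \<Rightarrow> real) \<Rightarrow> 'f"

definition pder :: "'a jvar \<Rightarrow> ('a, 'f::real_normed_vector) fn \<Rightarrow> ('a, 'f) fn" where
  "pder v f = (\<lambda>p. vector_derivative (\<lambda>t. f (p(v := t))) (at (p v)))"

fun pd_iter :: "'a jvar list \<Rightarrow> ('a, 'f::real_normed_vector) fn \<Rightarrow> ('a, 'f) fn" where
  "pd_iter [] f = f"
| "pd_iter (v # vs) f = pder v (pd_iter vs f)"

definition smooth_fn :: "('a, 'f::real_normed_vector) fn \<Rightarrow> bool" where
  "smooth_fn f \<longleftrightarrow>
     (\<forall>vs. continuous_on UNIV (pd_iter vs f) \<and>
          (\<forall>v p. (\<lambda>t. pd_iter vs f (p(v := t))) differentiable (at (p v))))"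

definition depends_only :: "'a jvar set \<Rightarrow> ('a, 'f) fn \<Rightarrow> bool" where
  "depends_only S f \<longleftrightarrow> (\<forall>p q. (\<forall>v\<in>S. p v = q v) \<longrightarrow> f p = f q)"

definition Aalg :: "nat \<Rightarrow> ('a, 'f::real_normed_vector) fn set" where
  "Aalg m = {f. smooth_fn f \<and> (\<exists>S. finite S \<and> (\<forall>v\<in>S. valid_var m v) \<and> depends_only S f)}"

(* total derivative D_mu (the sum is finite for f in \<A>) *)
definition Dtot :: "nat \<Rightarrow> nat \<Rightarrow> ('a, 'f::real_normed_field) fn \<Rightarrow> ('a, 'f) fn" where
  "Dtot m \<mu> f = (\<lambda>p. pder (Xv \<mu>) f p +
      (\<Sum>(\<alpha>, i) \<in> {(\<alpha>, i). i \<in> multi_idx m \<and> pder (Uv \<alpha> i) f \<noteq> (\<lambda>_. 0)}.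
          of_real (p (Uv \<alpha> (incr i \<mu>))) * pder (Uv \<alpha> i) f p))"

definition Dmulti :: "nat \<Rightarrow> (nat \<Rightarrow> nat) \<Rightarrow> ('a, 'f::real_normed_field) fn \<Rightarrow> ('a, 'f) fn" where
  "Dmulti m j = foldr (\<lambda>\<mu> g. (Dtot m \<mu> ^^ j \<mu>) \<circ> g) [0..<m] id"

(* vertical differentiations, represented by their coefficient families zeta^alpha_i *)
type_synonym ('a, 'f) vfield = "'a \<Rightarrow> (nat \<Rightarrow> nat) \<Rightarrow> ('a, 'f) fn"

definition VD :: "nat \<Rightarrow> ('a, 'f::real_normed_vector) vfield set" where
  "VD m = {\<zeta>. \<forall>\<alpha> i. (i \<in> multi_idx m \<longrightarrow> \<zeta> \<alpha> i \<in> Aalg m) \<and>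
                      (i \<notin> multi_idx m \<longrightarrow> \<zeta> \<alpha> i = (\<lambda>_. 0))}"

(* coefficients of [D_mu, X] *)
definition bracket :: "nat \<Rightarrow> nat \<Rightarrow> ('a, 'f::real_normed_field) vfield \<Rightarrow> ('a, 'f) vfield" where
  "bracket m \<mu> \<zeta> = (\<lambda>\<alpha> i. if i \<in> multi_idx m
       then (\<lambda>p. Dtot m \<mu> (\<zeta> \<alpha> i) p - \<zeta> \<alpha> (incr i \<mu>) p) else (\<lambda>_. 0))"

(* Epre m 0 = E^(-1) = 0,  Epre m (Suc q) = E^(q) *)
fun Epre :: "nat \<Rightarrow> nat \<Rightarrow> ('a, 'f::real_normed_field) vfield set" where
  "Epre m 0 = {\<lambda>\<alpha> i p. 0}"
| "Epre m (Suc q) = {\<zeta> \<in> VD m. \<forall>\<mu><m. bracket m \<mu> \<zeta> \<in> Epre m q}"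

definition Ecal :: "nat \<Rightarrow> nat \<Rightarrow> ('a, 'f::real_normed_field) vfield set" where
  "Ecal m q = Epre m (Suc q)"

definition eps :: "nat \<Rightarrow> (nat \<Rightarrow> nat) \<Rightarrow> ('a \<Rightarrow> ('a, 'f::real_normed_field) fn) \<Rightarrow> ('a, 'f) vfield" where
  "eps m k \<phi> = (\<lambda>\<alpha> i. if i \<in> multi_idx m \<and> mle m k i
      then (\<lambda>p. of_nat (mchoose m i k) * Dmulti m (msub i k) (\<phi> \<alpha>) p) else (\<lambda>_. 0))"

definition Kset :: "nat \<Rightarrow> nat \<Rightarrow> (nat \<Rightarrow> nat) set" where
  "Kset m q = {k \<in> multi_idx m. mabs m k \<le> q}"

definition eps_sum :: "nat \<Rightarrow> nat \<Rightarrow> ((nat \<Rightarrow> nat) \<Rightarrow> 'a \<Rightarrow> ('a, 'f::real_normed_field) fn) \<Rightarrow> ('a, 'f) vfield" where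
  "eps_sum m q \<Phi> = (\<lambda>\<alpha> i p. \<Sum>k\<in>Kset m q. eps m k (\<Phi> k) \<alpha> i p)"

end

theory Submission
  imports Defs
begin


definition sdiff :: "('a, 'f::real_normed_vector) fn \<Rightarrow> bool" where
  "sdiff h \<longleftrightarrow> (\<forall>v p. (\<lambda>t. h (p(v:=t))) differentiable (at (p v)))"

definition sm :: "nat \<Rightarrow> ('a, 'f::real_normed_vector) fn \<Rightarrow> bool" where
  "sm n h \<longleftrightarrow> (\<forall>vs. length vs \<le> n \<longrightarrow> continuous_on UNIV (pd_iter vs h) \<and> sdiff (pd_iter vs h))"

lemma smooth_sm: "smooth_fn h \<longleftrightarrow> (\<forall>n. sm n h)"
proof
  assume "smooth_fn h" thus "\<forall>n. sm n h" unfolding smooth_fn_def sm_def sdiff_def by blast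
next
  assume a: "\<forall>n. sm n h"
  show "smooth_fn h" unfolding smooth_fn_def
  proof (intro allI)
    fix vs :: "'a jvar list"
    from a have "sm (length vs) h" by blast
    thus "continuous_on UNIV (pd_iter vs h) \<and> (\<forall>v p. (\<lambda>t. pd_iter vs h (p(v := t))) differentiable at (p v))"
      unfolding sm_def sdiff_def by blast
  qed
qed

lemma smooth_cont: "smooth_fn h \<Longrightarrow> continuous_on UNIV h"
  unfolding smooth_fn_def by (drule spec[of _ "[]"]) simp

lemma smooth_sdiff: "smooth_fn h \<Longrightarrow> sdiff h"
  unfolding smooth_fn_def sdiff_def by (drule spec[of _ "[]"]) simp

lemma sdiff_at: "sdiff h \<Longrightarrow> (\<lambda>t. h (p(v:=t))) differentiable (at t0)"
proof -
  assume "sdiff h"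
  hence "(\<lambda>t. h ((p(v:=t0))(v:=t))) differentiable (at ((p(v:=t0)) v))" unfolding sdiff_def by blast
  thus ?thesis by simp
qed

lemma sdiff_hvd: "sdiff h \<Longrightarrow> ((\<lambda>t. h (p(v:=t))) has_vector_derivative pder v h (p(v:=t0))) (at t0)"
  using sdiff_at[of h p v t0] unfolding pder_def
  by (simp add: vector_derivative_works)

lemma pd_iter_append: "pd_iter (vs @ [v]) h = pd_iter vs (pder v h)"
  by (induction vs) auto

lemma smooth_pder: "smooth_fn h \<Longrightarrow> smooth_fn (pder v h)"
  unfolding smooth_fn_def pd_iter_append[symmetric] by blast

lemma smooth_from_pder:
  assumes "continuous_on UNIV h" "sdiff h" "\<And>v. smooth_fn (pder v h)"
  shows "smooth_fn h"
  unfolding smooth_fn_def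
proof (intro allI)
  fix vs :: "'a jvar list"
  show "continuous_on UNIV (pd_iter vs h) \<and>
         (\<forall>v p. (\<lambda>t. pd_iter vs h (p(v := t))) differentiable at (p v))"
  proof (cases vs rule: rev_exhaust)
    case Nil thus ?thesis using assms(1,2) by (simp add: sdiff_def)
  next
    case (snoc ws w)
    thus ?thesis using assms(3)[of w] unfolding smooth_fn_def by (simp add: pd_iter_append)
  qed
qed

lemma pder_add: "sdiff f \<Longrightarrow> sdiff g \<Longrightarrow> pder v (\<lambda>p. f p + g p) = (\<lambda>p. pder v f p + pder v g p)"
  unfolding pder_def sdiff_def by (intro ext vector_derivative_add_at) auto

lemma pder_diff: "sdiff f \<Longrightarrow> sdiff g \<Longrightarrow> pder v (\<lambda>p. f p - g p) = (\<lambda>p. pder v f p - pder v g p)"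
  unfolding pder_def sdiff_def by (intro ext vector_derivative_diff_at) auto

lemma pder_mult: "sdiff f \<Longrightarrow> sdiff g \<Longrightarrow>
   pder v (\<lambda>p. f p * g p) = (\<lambda>p. f p * pder v g p + pder v f p * (g p :: 'f::real_normed_field))"
  unfolding pder_def sdiff_def by (intro ext) (simp add: vector_derivative_mult_at)

lemma pder_const: "pder v (\<lambda>p. c) = (\<lambda>p. 0)"
  unfolding pder_def by simp

lemma sdiff_add: "sdiff f \<Longrightarrow> sdiff g \<Longrightarrow> sdiff (\<lambda>p. f p + g p)"
  unfolding sdiff_def by (auto intro: differentiable_add)

lemma sdiff_mult: "sdiff f \<Longrightarrow> sdiff g \<Longrightarrow> sdiff (\<lambda>p. f p * (g p :: 'f::real_normed_field))"
  unfolding sdiff_def by (auto intro: differentiable_mult)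

lemma sdiff_const: "sdiff (\<lambda>p. c)"
  unfolding sdiff_def by simp

lemma pd_iter_add:
  assumes "sm n a" "sm n b"
  shows "length vs \<le> Suc n \<Longrightarrow> pd_iter vs (\<lambda>p. a p + b p) = (\<lambda>p. pd_iter vs a p + pd_iter vs b p)"
proof (induction vs)
  case Nil thus ?case by simp
next
  case (Cons v vs)
  hence l: "length vs \<le> n" by simp
  have "pd_iter (v # vs) (\<lambda>p. a p + b p) = pder v (\<lambda>p. pd_iter vs a p + pd_iter vs b p)"
    using Cons by simp
  also have "\<dots> = (\<lambda>p. pd_iter (v#vs) a p + pd_iter (v#vs) b p)"
    using assms l unfolding sm_def by (simp add: pder_add)
  finally show ?case .
qed

lemma sm_add: "sm n a \<Longrightarrow> sm n b \<Longrightarrow> sm n (\<lambda>p. a p + b p)"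
  unfolding sm_def[of n "\<lambda>p. a p + b p"]
proof (intro allI impI)
  fix vs :: "'a jvar list" assume a: "sm n a" "sm n b" and l: "length vs \<le> n"
  hence e: "pd_iter vs (\<lambda>p. a p + b p) = (\<lambda>p. pd_iter vs a p + pd_iter vs b p)"
    by (intro pd_iter_add) auto
  show "continuous_on UNIV (pd_iter vs (\<lambda>p. a p + b p)) \<and> sdiff (pd_iter vs (\<lambda>p. a p + b p))"
    unfolding e using a l unfolding sm_def by (auto intro: continuous_on_add sdiff_add)
qed

lemma smooth_add: "smooth_fn a \<Longrightarrow> smooth_fn b \<Longrightarrow> smooth_fn (\<lambda>p. a p + b p)"
  by (simp add: smooth_sm sm_add)

lemma sm_mult: "smooth_fn f \<Longrightarrow> smooth_fn g \<Longrightarrow> sm n (\<lambda>p. f p * (g p :: 'f::real_normed_field))"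
proof (induction n arbitrary: f g)
  case 0
  have c: "continuous_on UNIV (\<lambda>p. f p * g p)" by (intro continuous_on_mult smooth_cont 0)
  have d: "sdiff (\<lambda>p. f p * g p)" by (intro sdiff_mult smooth_sdiff 0)
  show ?case unfolding sm_def using c d by auto
next
  case (Suc n)
  show ?case unfolding sm_def
  proof (intro allI impI)
    fix vs :: "'a jvar list" assume l: "length vs \<le> Suc n"
    show "continuous_on UNIV (pd_iter vs (\<lambda>p. f p * g p)) \<and> sdiff (pd_iter vs (\<lambda>p. f p * g p))"
    proof (cases vs rule: rev_exhaust)
      case Nil
      have "sm n (\<lambda>p. f p * g p)" using Suc.IH[OF Suc.prems] .
      hence "continuous_on UNIV (pd_iter [] (\<lambda>p. f p * g p)) \<and> sdiff (pd_iter [] (\<lambda>p. f p * g p))"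
        unfolding sm_def by (erule_tac x="[]" in allE) simp
      thus ?thesis using Nil by simp
    next
      case (snoc ws w)
      have e: "pd_iter vs (\<lambda>p. f p * g p) = pd_iter ws (\<lambda>p. f p * pder w g p + pder w f p * g p)"
        using snoc Suc.prems by (simp add: pd_iter_append pder_mult smooth_sdiff)
      have s1: "sm n (\<lambda>p. f p * pder w g p)"
        by (rule Suc.IH) (use Suc.prems in \<open>auto intro: smooth_pder\<close>)
      have s2: "sm n (\<lambda>p. pder w f p * g p)"
        by (rule Suc.IH) (use Suc.prems in \<open>auto intro: smooth_pder\<close>)
      have "sm n (\<lambda>p. f p * pder w g p + pder w f p * g p)"
        using sm_add[OF s1 s2] .
      thus ?thesis unfolding e using l snoc sm_def by auto
    qed
  qed
qed

lemma smooth_mult: "smooth_fn f \<Longrightarrow> smooth_fn g \<Longrightarrow> smooth_fn (\<lambda>p. f p * (g p :: 'f::real_normed_field))"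
proof -
  assume a: "smooth_fn f" "smooth_fn g"
  show ?thesis unfolding smooth_sm[of "\<lambda>p. f p * g p"] using sm_mult[OF a] by blast
qed

lemma pd_iter_const: "pd_iter vs (\<lambda>p. c) = (if vs = [] then (\<lambda>p. c) else (\<lambda>p. 0))"
  by (induction vs) (auto simp: pder_const)

lemma smooth_const: "smooth_fn (\<lambda>p. c)"
  unfolding smooth_fn_def pd_iter_const by simp

lemma pder_coord: "pder v (\<lambda>p. of_real (p w) :: 'f::real_normed_field) = (\<lambda>p. if v = w then 1 else 0)"
proof (intro ext)
  fix p :: "'a jvar \<Rightarrow> real"
  show "pder v (\<lambda>p. of_real (p w) :: 'f) p = (if v = w then 1 else 0)"
  proof (cases "v = w")
    case True
    have "((\<lambda>t. of_real t :: 'f) has_vector_derivative of_real 1) (at (p v))"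
      by (rule has_vector_derivative_of_real) (rule DERIV_ident)
    thus ?thesis using True unfolding pder_def by (simp add: vector_derivative_at)
  next
    case False thus ?thesis unfolding pder_def by simp
  qed
qed

lemma smooth_coord: "smooth_fn (\<lambda>p. of_real (p w) :: 'f::real_normed_field)"
proof (rule smooth_from_pder)
  show "continuous_on UNIV (\<lambda>p. of_real (p w) :: 'f)"
    by (intro continuous_on_of_real continuous_on_product_coordinates)
  show "sdiff (\<lambda>p. of_real (p w) :: 'f)"
    unfolding sdiff_def
  proof (intro allI)
    fix v p
    show "(\<lambda>t. of_real ((p(v := t)) w) :: 'f) differentiable at (p v)"
    proof (cases "v = w")
      case True
      have "((\<lambda>t. of_real t :: 'f) has_vector_derivative of_real 1) (at (p v))"
        by (rule has_vector_derivative_of_real) (rule DERIV_ident)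
      thus ?thesis using True by (auto intro: differentiableI_vector)
    next
      case False thus ?thesis by simp
    qed
  qed
  fix v show "smooth_fn (pder v (\<lambda>p. of_real (p w) :: 'f))"
    unfolding pder_coord by (rule smooth_const)
qed

lemma smooth_sum: "finite A \<Longrightarrow> (\<And>x. x \<in> A \<Longrightarrow> smooth_fn (F x)) \<Longrightarrow> smooth_fn (\<lambda>p. \<Sum>x\<in>A. F x p)"
proof (induction A rule: finite_induct)
  case empty thus ?case using smooth_const by simp
next
  case (insert x A) thus ?case by (simp add: smooth_add)
qed

lemma pder_sum: "finite A \<Longrightarrow> (\<And>x. x \<in> A \<Longrightarrow> smooth_fn (F x)) \<Longrightarrow>
   pder v (\<lambda>p. \<Sum>x\<in>A. F x p) = (\<lambda>p. \<Sum>x\<in>A. pder v (F x) p)"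
proof (induction A rule: finite_induct)
  case empty thus ?case by (simp add: pder_const)
next
  case (insert x A)
  have "pder v (\<lambda>p. \<Sum>y\<in>insert x A. F y p) = pder v (\<lambda>p. F x p + (\<Sum>y\<in>A. F y p))"
    using insert by simp
  also have "\<dots> = (\<lambda>p. pder v (F x) p + pder v (\<lambda>p. \<Sum>y\<in>A. F y p) p)"
    using insert by (intro pder_add smooth_sdiff smooth_sum) auto
  finally show ?case using insert by simp
qed

lemma smooth_diff: "smooth_fn a \<Longrightarrow> smooth_fn b \<Longrightarrow> smooth_fn (\<lambda>p. a p - (b p :: 'f::real_normed_field))"
proof -
  assume a: "smooth_fn a" "smooth_fn b"
  have "(\<lambda>p. a p - b p) = (\<lambda>p. a p + (\<lambda>p. -1) p * b p)" by auto
  moreover have "smooth_fn (\<lambda>p. a p + (\<lambda>p. -1) p * b p)"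
    using a by (intro smooth_add smooth_mult smooth_const)
  ultimately show ?thesis by simp
qed



lemma mvt_const:
  fixes f :: "real \<Rightarrow> 'f::real_normed_vector"
  assumes ab: "a \<le> b"
    and d: "\<And>x. x \<in> {a..b} \<Longrightarrow> (f has_vector_derivative f' x) (at x)"
    and bd: "\<And>x. x \<in> {a..b} \<Longrightarrow> norm (f' x - c) \<le> B"
  shows "norm (f b - f a - (b - a) *\<^sub>R c) \<le> (b - a) * B"
proof (cases "a = b")
  case True thus ?thesis by simp
next
  case False
  hence ab': "a < b" using ab by simp
  define g where "g x = f x - x *\<^sub>R c" for x
  have dg: "(g has_vector_derivative (f' x - c)) (at x)" if "x \<in> {a..b}" for x
    unfolding g_def using d[OF that]
    by (intro derivative_eq_intros) auto
  have cg: "continuous_on {a..b} g"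
  proof (intro continuous_at_imp_continuous_on ballI)
    fix x assume "x \<in> {a..b}"
    show "isCont g x" using has_vector_derivative_continuous[OF dg[OF \<open>x \<in> {a..b}\<close>]] .
  qed
  have cp: "continuous_on {a..b} (\<lambda>x. x * B)" by (intro continuous_intros)
  have "norm (g b - g a) \<le> b * B - a * B"
  proof (rule differentiable_bound_general[OF ab' cg cp])
    fix x assume "a < x" "x < b"
    thus "(g has_vector_derivative f' x - c) (at x)" using dg by auto
    show "((\<lambda>x. x * B) has_vector_derivative B) (at x)"
      by (auto intro!: derivative_eq_intros simp: has_real_derivative_iff_has_vector_derivative[symmetric])
    show "norm (f' x - c) \<le> B" using bd \<open>a < x\<close> \<open>x < b\<close> by auto
  qed
  moreover have "g b - g a = f b - f a - (b - a) *\<^sub>R c" unfolding g_def by (simp add: algebra_simps)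
  ultimately show ?thesis by (simp add: algebra_simps)
qed

lemma schwarz2:
  fixes G :: "real \<Rightarrow> real \<Rightarrow> 'f::real_normed_vector"
  assumes G1: "\<And>s t. ((\<lambda>s. G s t) has_vector_derivative G1 s t) (at s)"
  and G2: "\<And>s t. ((\<lambda>t. G s t) has_vector_derivative G2 s t) (at t)"
  and G12: "\<And>s t. ((\<lambda>t. G1 s t) has_vector_derivative G12 s t) (at t)"
  and G21: "\<And>s t. ((\<lambda>s. G2 s t) has_vector_derivative G21 s t) (at s)"
  and c12: "isCont (\<lambda>z. G12 (fst z) (snd z)) (a,b)"
  and c21: "isCont (\<lambda>z. G21 (fst z) (snd z)) (a,b)"
  shows "G12 a b = G21 a b"
proof (rule ccontr)
  assume ne: "G12 a b \<noteq> G21 a b"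
  define e where "e = norm (G12 a b - G21 a b) / 4"
  have e: "e > 0" using ne by (simp add: e_def)
  obtain d1 where d1: "d1>0" "\<And>z. dist z (a,b) < d1 \<Longrightarrow> dist (G12 (fst z) (snd z)) (G12 a b) < e"
    using c12[unfolded continuous_at_eps_delta] e by fastforce
  obtain d2 where d2: "d2>0" "\<And>z. dist z (a,b) < d2 \<Longrightarrow> dist (G21 (fst z) (snd z)) (G21 a b) < e"
    using c21[unfolded continuous_at_eps_delta] e by fastforce
  define h where "h = min d1 d2 / 3"
  have h: "h > 0" using d1 d2 by (simp add: h_def)
  have near: "norm (G12 s t - G12 a b) \<le> e \<and> norm (G21 s t - G21 a b) \<le> e"
    if "s \<in> {a..a+h}" "t \<in> {b..b+h}" for s t
  proof -
    have "dist (s,t) (a,b) = sqrt ((dist s a)\<^sup>2 + (dist t b)\<^sup>2)" by (rule dist_Pair_Pair)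
    also have "\<dots> \<le> \<bar>dist s a\<bar> + \<bar>dist t b\<bar>" by (rule sqrt_sum_squares_le_sum_abs)
    also have "\<dots> \<le> 2 * h" using that by (auto simp: dist_real_def)
    finally have "dist (s,t) (a,b) < min d1 d2" using h unfolding h_def by linarith
    hence "dist (G12 s t) (G12 a b) < e" "dist (G21 s t) (G21 a b) < e"
      using d1(2)[of "(s,t)"] d2(2)[of "(s,t)"] by auto
    thus ?thesis by (simp add: dist_norm)
  qed
  define \<Delta> where "\<Delta> = G (a+h) (b+h) - G (a+h) b - G a (b+h) + G a b"
  have s1: "norm ((G1 s (b+h) - G1 s b) - h *\<^sub>R G12 a b) \<le> h * e" if "s \<in> {a..a+h}" for s
  proof -
    have "norm (G1 s (b+h) - G1 s b - ((b+h) - b) *\<^sub>R G12 a b) \<le> ((b+h) - b) * e"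
      by (rule mvt_const[of b "b+h" "\<lambda>t. G1 s t" "G12 s"]) (use h G12 near that in auto)
    thus ?thesis by simp
  qed
  have s2: "norm (\<Delta> - h *\<^sub>R (h *\<^sub>R G12 a b)) \<le> h * (h * e)"
  proof -
    have "norm ((G (a+h) (b+h) - G (a+h) b) - (G a (b+h) - G a b) - ((a+h) - a) *\<^sub>R (h *\<^sub>R G12 a b)) \<le> ((a+h) - a) * (h * e)"
      by (rule mvt_const[of a "a+h" "\<lambda>s. G s (b+h) - G s b" "\<lambda>s. G1 s (b+h) - G1 s b"])
         (use h s1 in \<open>auto intro!: has_vector_derivative_diff G1\<close>)
    thus ?thesis by (simp add: \<Delta>_def algebra_simps)
  qed
  have t1: "norm ((G2 (a+h) t - G2 a t) - h *\<^sub>R G21 a b) \<le> h * e" if "t \<in> {b..b+h}" for t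
  proof -
    have "norm (G2 (a+h) t - G2 a t - ((a+h) - a) *\<^sub>R G21 a b) \<le> ((a+h) - a) * e"
      by (rule mvt_const[of a "a+h" "\<lambda>s. G2 s t" "\<lambda>s. G21 s t"]) (use h G21 near that in auto)
    thus ?thesis by simp
  qed
  have t2: "norm (\<Delta> - h *\<^sub>R (h *\<^sub>R G21 a b)) \<le> h * (h * e)"
  proof -
    have "norm ((G (a+h) (b+h) - G a (b+h)) - (G (a+h) b - G a b) - ((b+h) - b) *\<^sub>R (h *\<^sub>R G21 a b)) \<le> ((b+h) - b) * (h * e)"
      by (rule mvt_const[of b "b+h" "\<lambda>t. G (a+h) t - G a t" "\<lambda>t. G2 (a+h) t - G2 a t"])
         (use h t1 in \<open>auto intro!: has_vector_derivative_diff G2\<close>)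
    thus ?thesis by (simp add: \<Delta>_def algebra_simps)
  qed
  have eq: "h *\<^sub>R (h *\<^sub>R G12 a b) - h *\<^sub>R (h *\<^sub>R G21 a b) =
     (\<Delta> - h *\<^sub>R (h *\<^sub>R G21 a b)) - (\<Delta> - h *\<^sub>R (h *\<^sub>R G12 a b))" by simp
  have "norm (h *\<^sub>R (h *\<^sub>R G12 a b) - h *\<^sub>R (h *\<^sub>R G21 a b)) \<le> norm (\<Delta> - h *\<^sub>R (h *\<^sub>R G21 a b)) + norm (\<Delta> - h *\<^sub>R (h *\<^sub>R G12 a b))"
    unfolding eq by (rule norm_triangle_ineq4)
  also have "\<dots> \<le> 2 * (h * h * e)" using s2 t2 by simp
  finally have 1: "norm (h *\<^sub>R (h *\<^sub>R G12 a b) - h *\<^sub>R (h *\<^sub>R G21 a b)) \<le> 2 * (h * h * e)" .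
  have "h *\<^sub>R (h *\<^sub>R G12 a b) - h *\<^sub>R (h *\<^sub>R G21 a b) = (h * h) *\<^sub>R (G12 a b - G21 a b)"
    by (simp add: scaleR_diff_right)
  hence "norm (h *\<^sub>R (h *\<^sub>R G12 a b) - h *\<^sub>R (h *\<^sub>R G21 a b)) = (h * h) * norm (G12 a b - G21 a b)"
    using h by simp
  with 1 have "(h * h) * norm (G12 a b - G21 a b) \<le> (h * h) * (2 * e)" by simp
  moreover have "h * h > 0" using h by simp
  ultimately have "norm (G12 a b - G21 a b) \<le> 2 * e" by (rule mult_left_le_imp_le) 
  thus False using e unfolding e_def by simp
qed


lemma cont_upd2: "continuous_on UNIV (\<lambda>z::real\<times>real. p(v := fst z, w := snd z))"
proof (rule continuous_on_coordinatewise_then_product)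
  fix i
  show "continuous_on UNIV (\<lambda>z::real\<times>real. (p(v := fst z, w := snd z)) i)"
  proof (cases "i = w")
    case True thus ?thesis by (simp add: continuous_on_snd)
  next
    case False
    thus ?thesis by (cases "i = v") (simp_all add: continuous_on_fst)
  qed
qed

lemma isCont_upd2:
  assumes "continuous_on UNIV F"
  shows "isCont (\<lambda>z::real\<times>real. F (p(v := fst z, w := snd z))) z0"
proof -
  have "continuous_on UNIV (F \<circ> (\<lambda>z::real\<times>real. p(v := fst z, w := snd z)))"
    by (rule continuous_on_compose[OF cont_upd2]) (rule continuous_on_subset[OF assms], simp)
  hence "\<forall>x\<in>UNIV. isCont (F \<circ> (\<lambda>z::real\<times>real. p(v := fst z, w := snd z))) x"
    by (simp only: continuous_on_eq_continuous_at[OF open_UNIV])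
  hence "isCont (F \<circ> (\<lambda>z::real\<times>real. p(v := fst z, w := snd z))) z0" by blast
  thus ?thesis by (simp only: o_def)
qed

lemma pder_comm:
  assumes f: "smooth_fn (f :: ('a, 'f::real_normed_vector) fn)"
  shows "pder v (pder w f) = pder w (pder v f)"
proof (cases "v = w")
  case True thus ?thesis by simp
next
  case False
  show ?thesis
  proof (rule ext)
    fix p :: "'a jvar \<Rightarrow> real"
    have tw: "p(v := s, w := t) = (p(w := t))(v := s)" for s t using False by (simp add: fun_upd_twist)
    have sf: "sdiff f" "sdiff (pder v f)" "sdiff (pder w f)"
      using f by (auto intro: smooth_sdiff smooth_pder)
    have "pder w (pder v f) (p(v := p v, w := p w)) = pder v (pder w f) (p(v := p v, w := p w))"
    proof (rule schwarz2[of "\<lambda>s t. f (p(v := s, w := t))" "\<lambda>s t. pder v f (p(v := s, w := t))"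
          "\<lambda>s t. pder w f (p(v := s, w := t))"])
      fix s t
      show "((\<lambda>s. f (p(v := s, w := t))) has_vector_derivative pder v f (p(v := s, w := t))) (at s)"
        unfolding tw by (rule sdiff_hvd[OF sf(1)])
      show "((\<lambda>t. f (p(v := s, w := t))) has_vector_derivative pder w f (p(v := s, w := t))) (at t)"
        by (rule sdiff_hvd[OF sf(1)])
      show "((\<lambda>t. pder v f (p(v := s, w := t))) has_vector_derivative pder w (pder v f) (p(v := s, w := t))) (at t)"
        by (rule sdiff_hvd[OF sf(2)])
      show "((\<lambda>s. pder w f (p(v := s, w := t))) has_vector_derivative pder v (pder w f) (p(v := s, w := t))) (at s)"
        unfolding tw by (rule sdiff_hvd[OF sf(3)])
    next
      show "isCont (\<lambda>z. pder w (pder v f) (p(v := fst z, w := snd z))) (p v, p w)"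
        using smooth_cont[OF smooth_pder[OF smooth_pder[OF f]]] by (rule isCont_upd2)
      show "isCont (\<lambda>z. pder v (pder w f) (p(v := fst z, w := snd z))) (p v, p w)"
        using smooth_cont[OF smooth_pder[OF smooth_pder[OF f]]] by (rule isCont_upd2)
    qed
    thus "pder v (pder w f) p = pder w (pder v f) p" by simp
  qed
qed



lemma dep_mono: "depends_only S f \<Longrightarrow> S \<subseteq> T \<Longrightarrow> depends_only T f"
  unfolding depends_only_def by blast

lemma dep_const: "depends_only S (\<lambda>p. c)"
  unfolding depends_only_def by simp

lemma dep_coord: "w \<in> S \<Longrightarrow> depends_only S (\<lambda>p. of_real (p w))"
  unfolding depends_only_def by simp

lemma depD: "depends_only S f \<Longrightarrow> (\<forall>v\<in>S. p v = q v) \<Longrightarrow> f p = f q"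
  unfolding depends_only_def by blast

lemma dep_op: assumes "depends_only S f" "depends_only S g"
  shows "depends_only S (\<lambda>p. h (f p) (g p))"
  unfolding depends_only_def
proof (intro allI impI)
  fix p q :: "'a jvar \<Rightarrow> real" assume a: "\<forall>v\<in>S. p v = q v"
  show "h (f p) (g p) = h (f q) (g q)" using depD[OF assms(1) a] depD[OF assms(2) a] by simp
qed

lemma dep_add: "depends_only S f \<Longrightarrow> depends_only S g \<Longrightarrow> depends_only S (\<lambda>p. f p + g p)"
  by (rule dep_op)

lemma dep_diff: "depends_only S f \<Longrightarrow> depends_only S g \<Longrightarrow> depends_only S (\<lambda>p. f p - g p)"
  by (rule dep_op)

lemma dep_mult: "depends_only S f \<Longrightarrow> depends_only S g \<Longrightarrow> depends_only S (\<lambda>p. f p * g p)"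
  by (rule dep_op)

lemma dep_sum: assumes d: "\<And>x. x \<in> A \<Longrightarrow> depends_only S (F x)"
  shows "depends_only S (\<lambda>p. \<Sum>x\<in>A. F x p)"
  unfolding depends_only_def
proof (intro allI impI)
  fix p q :: "_ \<Rightarrow> real" assume a: "\<forall>v\<in>S. p v = q v"
  show "(\<Sum>x\<in>A. F x p) = (\<Sum>x\<in>A. F x q)" using depD[OF d a] by (intro sum.cong) auto
qed

lemma pder_zero:
  assumes "depends_only S f" "v \<notin> S"
  shows "pder v f = (\<lambda>p. 0)"
proof (rule ext)
  fix p
  have "(\<lambda>t. f (p(v := t))) = (\<lambda>t. f p)"
    using assms by (intro ext depD[OF assms(1)]) auto
  thus "pder v f p = 0" unfolding pder_def by simp
qed

lemma dep_pder:
  assumes d: "depends_only S f"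
  shows "depends_only S (pder v f)"
proof (cases "v \<in> S")
  case False show ?thesis unfolding pder_zero[OF d False] by (rule dep_const)
next
  case True
  show ?thesis unfolding depends_only_def
  proof (intro allI impI)
    fix p q :: "'a jvar \<Rightarrow> real" assume a: "\<forall>v\<in>S. p v = q v"
    have "(\<lambda>t. f (p(v := t))) = (\<lambda>t. f (q(v := t)))"
      using a by (intro ext depD[OF d]) auto
    moreover have "p v = q v" using a True by blast
    ultimately show "pder v f p = pder v f q" unfolding pder_def by simp
  qed
qed

lemma AalgI: "smooth_fn f \<Longrightarrow> finite S \<Longrightarrow> (\<And>v. v \<in> S \<Longrightarrow> valid_var m v) \<Longrightarrow> depends_only S f \<Longrightarrow> f \<in> Aalg m"
  unfolding Aalg_def by blast

lemma AalgE: "f \<in> Aalg m \<Longrightarrow> (\<And>S. smooth_fn f \<Longrightarrow> finite S \<Longrightarrow> (\<forall>v\<in>S. valid_var m v) \<Longrightarrow> depends_only S f \<Longrightarrow> P) \<Longrightarrow> P"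
  unfolding Aalg_def by blast

lemma Aalg_smooth: "f \<in> Aalg m \<Longrightarrow> smooth_fn f"
  unfolding Aalg_def by blast

lemma Aalg_const: "(\<lambda>p. c) \<in> Aalg m"
  by (rule AalgI[of _ "{}"]) (auto simp: smooth_const dep_const)

lemma Aalg_coord: "valid_var m w \<Longrightarrow> (\<lambda>p. of_real (p w) :: 'f::real_normed_field) \<in> Aalg m"
  by (rule AalgI[of _ "{w}"]) (auto simp: smooth_coord dep_coord)

lemma Aalg_add: "f \<in> Aalg m \<Longrightarrow> g \<in> Aalg m \<Longrightarrow> (\<lambda>p. f p + g p) \<in> Aalg m"
proof -
  assume "f \<in> Aalg m" "g \<in> Aalg m"
  then obtain S T where "smooth_fn f" "finite S" "\<forall>v\<in>S. valid_var m v" "depends_only S f"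
     "smooth_fn g" "finite T" "\<forall>v\<in>T. valid_var m v" "depends_only T g"
    by (metis AalgE)
  thus ?thesis
    by (intro AalgI[of _ "S \<union> T"] smooth_add dep_add) (auto intro: dep_mono)
qed

lemma Aalg_diff: "f \<in> Aalg m \<Longrightarrow> g \<in> Aalg m \<Longrightarrow> (\<lambda>p. f p - g p :: 'f::real_normed_field) \<in> Aalg m"
proof -
  assume "f \<in> Aalg m" "g \<in> Aalg m"
  then obtain S T where "smooth_fn f" "finite S" "\<forall>v\<in>S. valid_var m v" "depends_only S f"
     "smooth_fn g" "finite T" "\<forall>v\<in>T. valid_var m v" "depends_only T g"
    by (metis AalgE)
  thus ?thesis
    by (intro AalgI[of _ "S \<union> T"] smooth_diff dep_diff) (auto intro: dep_mono)
qed

lemma Aalg_mult: "f \<in> Aalg m \<Longrightarrow> g \<in> Aalg m \<Longrightarrow> (\<lambda>p. f p * g p :: 'f::real_normed_field) \<in> Aalg m"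
proof -
  assume "f \<in> Aalg m" "g \<in> Aalg m"
  then obtain S T where "smooth_fn f" "finite S" "\<forall>v\<in>S. valid_var m v" "depends_only S f"
     "smooth_fn g" "finite T" "\<forall>v\<in>T. valid_var m v" "depends_only T g"
    by (metis AalgE)
  thus ?thesis
    by (intro AalgI[of _ "S \<union> T"] smooth_mult dep_mult) (auto intro: dep_mono)
qed

lemma Aalg_sum: "finite A \<Longrightarrow> (\<And>x. x \<in> A \<Longrightarrow> F x \<in> Aalg m) \<Longrightarrow> (\<lambda>p. \<Sum>x\<in>A. F x p) \<in> Aalg m"
proof (induction A rule: finite_induct)
  case empty thus ?case using Aalg_const by simp
next
  case (insert x A) thus ?case by (simp add: Aalg_add)
qed



definition cD :: "nat \<Rightarrow> 'a jvar \<Rightarrow> ('a, 'f::real_normed_field) fn" where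
  "cD \<mu> v = (case v of Xv \<nu> \<Rightarrow> (\<lambda>p. if \<nu> = \<mu> then 1 else 0) | Uv \<alpha> i \<Rightarrow> (\<lambda>p. of_real (p (Uv \<alpha> (incr i \<mu>)))))"

definition sh :: "nat \<Rightarrow> 'a jvar \<Rightarrow> 'a jvar" where
  "sh \<mu> v = (case v of Xv \<nu> \<Rightarrow> Xv \<nu> | Uv \<alpha> i \<Rightarrow> Uv \<alpha> (incr i \<mu>))"

definition Lop :: "'a jvar set \<Rightarrow> ('a jvar \<Rightarrow> ('a, 'f) fn) \<Rightarrow> ('a, 'f::real_normed_field) fn \<Rightarrow> ('a, 'f) fn" where
  "Lop W a f = (\<lambda>p. \<Sum>v\<in>W. a v p * pder v f p)"

lemma cD_smooth: "smooth_fn (cD \<mu> v)"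
  by (cases v) (auto simp: cD_def smooth_const smooth_coord)

lemma cD_dep: "depends_only {sh \<mu> v} (cD \<mu> v)"
  by (cases v) (auto simp: cD_def sh_def dep_const dep_coord)

lemma incr_multi: "i \<in> multi_idx m \<Longrightarrow> \<mu> < m \<Longrightarrow> incr i \<mu> \<in> multi_idx m"
  unfolding multi_idx_def incr_def by auto

lemma sh_valid: "valid_var m v \<Longrightarrow> \<mu> < m \<Longrightarrow> valid_var m (sh \<mu> v)"
  by (cases v) (auto simp: sh_def valid_var_def incr_multi)

lemma incr_comm: "incr (incr i \<nu>) \<mu> = incr (incr i \<mu>) \<nu>"
  unfolding incr_def by (cases "\<mu> = \<nu>") (auto simp: fun_upd_twist)

lemma Dtot_Lop:
  fixes f :: "('a, 'f::real_normed_field) fn"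
  assumes d: "depends_only S f" and vS: "\<forall>v\<in>S. valid_var m v" and W: "finite W" "S \<subseteq> W"
  shows "Dtot m \<mu> f = Lop W (cD \<mu>) f"
proof (rule ext)
  fix p
  define g where "g v = cD \<mu> v p * pder v f p" for v
  have z: "g v = 0" if "v \<notin> S" for v unfolding g_def pder_zero[OF d that] by simp
  define B where "B = {(\<alpha>, i). i \<in> multi_idx m \<and> pder (Uv \<alpha> i) f \<noteq> (\<lambda>_. 0)}"
  have BS: "Uv \<alpha> i \<in> S" if "(\<alpha>, i) \<in> B" for \<alpha> i
    using that pder_zero[OF d, of "Uv \<alpha> i"] unfolding B_def by auto
  have injU: "inj (\<lambda>(\<alpha>, i). Uv \<alpha> i)" by (auto simp: inj_def)
  have fS: "finite S" using W finite_subset by blast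
  have fB: "finite B"
  proof (rule finite_subset)
    show "B \<subseteq> (\<lambda>(\<alpha>, i). Uv \<alpha> i) -` S" using BS by auto
    show "finite ((\<lambda>(\<alpha>, i). Uv \<alpha> i) -` S)" by (rule finite_vimageI[OF fS injU])
  qed
  define U where "U = insert (Xv \<mu>) ((\<lambda>(\<alpha>, i). Uv \<alpha> i) ` B)"
  have fU: "finite U" unfolding U_def using fB by simp
  have "Lop W (cD \<mu>) f p = (\<Sum>v\<in>W. g v)" unfolding Lop_def g_def by simp
  also have "\<dots> = (\<Sum>v\<in>S. g v)"
    by (rule sum.mono_neutral_right[OF W(1) W(2)]) (auto intro: z)
  also have "\<dots> = (\<Sum>v\<in>S \<union> U. g v)"
    by (rule sum.mono_neutral_left) (use fS fU z in auto)
  also have "\<dots> = (\<Sum>v\<in>U. g v)"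
  proof (rule sum.mono_neutral_right)
    show "finite (S \<union> U)" using fS fU by simp
    show "U \<subseteq> S \<union> U" by blast
    show "\<forall>v\<in>S \<union> U - U. g v = 0"
    proof
      fix v assume v: "v \<in> S \<union> U - U"
      show "g v = 0"
      proof (cases v)
        case (Xv \<nu>)
        hence "\<nu> \<noteq> \<mu>" using v unfolding U_def by auto
        thus ?thesis unfolding g_def Xv cD_def by simp
      next
        case (Uv \<alpha> i)
        hence "i \<in> multi_idx m" using v vS by (auto simp: valid_var_def)
        moreover have "(\<alpha>, i) \<notin> B" using v Uv unfolding U_def by auto
        ultimately have "pder (Uv \<alpha> i) f = (\<lambda>_. 0)" unfolding B_def by auto
        thus ?thesis unfolding g_def Uv by simp
      qed
    qed
  qed
  also have "\<dots> = g (Xv \<mu>) + (\<Sum>v\<in>(\<lambda>(\<alpha>, i). Uv \<alpha> i) ` B. g v)"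
    unfolding U_def using fB by (subst sum.insert) auto
  also have "(\<Sum>v\<in>(\<lambda>(\<alpha>, i). Uv \<alpha> i) ` B. g v) = (\<Sum>x\<in>B. g ((\<lambda>(\<alpha>, i). Uv \<alpha> i) x))"
    using sum.reindex[OF inj_on_subset[OF injU], of B g] by (simp add: o_def)
  also have "\<dots> = (\<Sum>(\<alpha>, i)\<in>B. of_real (p (Uv \<alpha> (incr i \<mu>))) * pder (Uv \<alpha> i) f p)"
    by (rule sum.cong) (auto simp: g_def cD_def)
  finally have "Lop W (cD \<mu>) f p = g (Xv \<mu>) + (\<Sum>(\<alpha>, i)\<in>B. of_real (p (Uv \<alpha> (incr i \<mu>))) * pder (Uv \<alpha> i) f p)" .
  moreover have "g (Xv \<mu>) = pder (Xv \<mu>) f p" by (simp add: g_def cD_def)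
  ultimately show "Dtot m \<mu> f p = Lop W (cD \<mu>) f p"
    unfolding Dtot_def B_def[symmetric] by simp
qed

lemma Lop_smooth: "finite W \<Longrightarrow> (\<And>v. v \<in> W \<Longrightarrow> smooth_fn (a v)) \<Longrightarrow> smooth_fn f \<Longrightarrow> smooth_fn (Lop W a f)"
  unfolding Lop_def by (intro smooth_sum smooth_mult smooth_pder) auto

lemma Lop_dep: "(\<And>v. v \<in> W \<Longrightarrow> depends_only T (a v)) \<Longrightarrow> depends_only T f \<Longrightarrow> depends_only T (Lop W a f)"
  unfolding Lop_def by (intro dep_sum dep_mult dep_pder) auto

lemma Lop_add: "smooth_fn f \<Longrightarrow> smooth_fn g \<Longrightarrow> Lop W a (\<lambda>p. f p + g p) = (\<lambda>p. Lop W a f p + Lop W a g p)"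
  unfolding Lop_def by (simp add: pder_add smooth_sdiff distrib_left sum.distrib)

lemma Lop_diff: "smooth_fn f \<Longrightarrow> smooth_fn g \<Longrightarrow> Lop W a (\<lambda>p. f p - g p) = (\<lambda>p. Lop W a f p - Lop W a g p)"
  unfolding Lop_def by (simp add: pder_diff smooth_sdiff right_diff_distrib sum_subtractf)

lemma pder_cmult: "smooth_fn f \<Longrightarrow> pder v (\<lambda>p. c * f p) = (\<lambda>p. c * pder v f p :: 'f::real_normed_field)"
proof -
  assume f: "smooth_fn f"
  have "pder v (\<lambda>p. (\<lambda>p. c) p * f p) = (\<lambda>p. c * pder v f p + pder v (\<lambda>p. c) p * f p)"
    by (rule pder_mult[OF sdiff_const smooth_sdiff[OF f]])
  thus ?thesis by (simp add: pder_const)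
qed

lemma Lop_cmult: "smooth_fn f \<Longrightarrow> Lop W a (\<lambda>p. c * f p) = (\<lambda>p. c * Lop W a f p)"
  unfolding Lop_def by (simp add: pder_cmult sum_distrib_left mult.left_commute)

lemma Lop_zero: "Lop W a (\<lambda>p. 0) = (\<lambda>p. 0)"
  unfolding Lop_def by (simp add: pder_const)



lemma Dtot_dep:
  fixes f :: "('a, 'f::real_normed_field) fn"
  assumes d: "depends_only S f" and vS: "\<forall>v\<in>S. valid_var m v" and fS: "finite S"
  shows "depends_only (S \<union> sh \<mu> ` S) (Dtot m \<mu> f)"
proof -
  have "Dtot m \<mu> f = Lop S (cD \<mu>) f" by (rule Dtot_Lop[OF d vS fS]) simp
  moreover have "depends_only (S \<union> sh \<mu> ` S) (Lop S (cD \<mu>) f)"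
    by (rule Lop_dep) (auto intro: dep_mono[OF cD_dep] dep_mono[OF d])
  ultimately show ?thesis by simp
qed

lemma Dtot_Aalg:
  assumes f: "f \<in> Aalg m" and \<mu>: "\<mu> < m"
  shows "Dtot m \<mu> f \<in> Aalg m"
proof -
  obtain S where sf: "smooth_fn f" and fS: "finite S" and vS: "\<forall>v\<in>S. valid_var m v" and d: "depends_only S f"
    using f by (rule AalgE)
  have e: "Dtot m \<mu> f = Lop S (cD \<mu>) f" by (rule Dtot_Lop[OF d vS fS]) simp
  show ?thesis
  proof (rule AalgI[of _ "S \<union> sh \<mu> ` S"])
    show "smooth_fn (Dtot m \<mu> f)" unfolding e by (rule Lop_smooth[OF fS cD_smooth sf])
    show "finite (S \<union> sh \<mu> ` S)" using fS by simp
    show "depends_only (S \<union> sh \<mu> ` S) (Dtot m \<mu> f)" by (rule Dtot_dep[OF d vS fS])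
    fix v assume "v \<in> S \<union> sh \<mu> ` S" thus "valid_var m v" using vS \<mu> sh_valid by auto
  qed
qed

lemma Aalg_common:
  assumes "f \<in> Aalg m" "g \<in> Aalg m"
  obtains W where "finite W" "\<forall>v\<in>W. valid_var m v" "depends_only W f" "depends_only W g"
proof -
  obtain S where "finite S" "\<forall>v\<in>S. valid_var m v" "depends_only S f" using assms(1) by (rule AalgE)
  moreover obtain T where "finite T" "\<forall>v\<in>T. valid_var m v" "depends_only T g" using assms(2) by (rule AalgE)
  ultimately show ?thesis using that[of "S \<union> T"] by (auto intro: dep_mono)
qed

lemma Dtot_add:
  assumes f: "f \<in> Aalg m" and g: "g \<in> Aalg m"
  shows "Dtot m \<mu> (\<lambda>p. f p + g p) = (\<lambda>p. Dtot m \<mu> f p + Dtot m \<mu> g p)"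
proof -
  obtain W where W: "finite W" "\<forall>v\<in>W. valid_var m v" "depends_only W f" "depends_only W g"
    using Aalg_common[OF f g] by blast
  have "Dtot m \<mu> (\<lambda>p. f p + g p) = Lop W (cD \<mu>) (\<lambda>p. f p + g p)"
    using W by (intro Dtot_Lop dep_add) auto
  also have "\<dots> = (\<lambda>p. Lop W (cD \<mu>) f p + Lop W (cD \<mu>) g p)"
    using f g by (intro Lop_add Aalg_smooth)
  also have "\<dots> = (\<lambda>p. Dtot m \<mu> f p + Dtot m \<mu> g p)"
    using W by (simp add: Dtot_Lop[of W _ m, OF _ _ W(1)])
  finally show ?thesis .
qed

lemma Dtot_diff:
  assumes f: "f \<in> Aalg m" and g: "g \<in> Aalg m"
  shows "Dtot m \<mu> (\<lambda>p. f p - g p) = (\<lambda>p. Dtot m \<mu> f p - Dtot m \<mu> g p)"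
proof -
  obtain W where W: "finite W" "\<forall>v\<in>W. valid_var m v" "depends_only W f" "depends_only W g"
    using Aalg_common[OF f g] by blast
  have "Dtot m \<mu> (\<lambda>p. f p - g p) = Lop W (cD \<mu>) (\<lambda>p. f p - g p)"
    using W by (intro Dtot_Lop dep_diff) auto
  also have "\<dots> = (\<lambda>p. Lop W (cD \<mu>) f p - Lop W (cD \<mu>) g p)"
    using f g by (intro Lop_diff Aalg_smooth)
  also have "\<dots> = (\<lambda>p. Dtot m \<mu> f p - Dtot m \<mu> g p)"
    using W by (simp add: Dtot_Lop[of W _ m, OF _ _ W(1)])
  finally show ?thesis .
qed

lemma Dtot_cmult:
  assumes f: "f \<in> Aalg m"
  shows "Dtot m \<mu> (\<lambda>p. c * f p) = (\<lambda>p. c * Dtot m \<mu> f p)"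
proof -
  obtain W where W: "finite W" "\<forall>v\<in>W. valid_var m v" "depends_only W f" using f by (rule AalgE)
  have "Dtot m \<mu> (\<lambda>p. c * f p) = Lop W (cD \<mu>) (\<lambda>p. c * f p)"
    using W by (intro Dtot_Lop dep_mult dep_const) auto
  also have "\<dots> = (\<lambda>p. c * Lop W (cD \<mu>) f p)"
    using f by (intro Lop_cmult Aalg_smooth)
  also have "\<dots> = (\<lambda>p. c * Dtot m \<mu> f p)"
    using W by (simp add: Dtot_Lop[of W _ m, OF _ _ W(1)])
  finally show ?thesis .
qed

lemma Dtot_zero: "Dtot m \<mu> (\<lambda>p. 0) = (\<lambda>p. 0)"
proof -
  have "Dtot m \<mu> (\<lambda>p. 0) = Lop {} (cD \<mu>) (\<lambda>p. 0)"
    by (rule Dtot_Lop[OF dep_const]) auto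
  thus ?thesis by (simp add: Lop_def)
qed



lemma Lop_Lop:
  assumes W: "finite W" and a: "\<And>v. v \<in> W \<Longrightarrow> smooth_fn (a v)" and b: "\<And>v. v \<in> W \<Longrightarrow> smooth_fn (b v)"
    and f: "smooth_fn (f :: ('a, 'f::real_normed_field) fn)"
  shows "Lop W a (Lop W b f) p = (\<Sum>v\<in>W. Lop W a (b v) p * pder v f p)
      + (\<Sum>w\<in>W. \<Sum>v\<in>W. a w p * (b v p * pder w (pder v f) p))"
proof -
  have inner: "pder w (Lop W b f) p = (\<Sum>v\<in>W. b v p * pder w (pder v f) p + pder w (b v) p * pder v f p)" for w
  proof -
    have "pder w (Lop W b f) = (\<lambda>p. \<Sum>v\<in>W. pder w (\<lambda>q. b v q * pder v f q) p)"
      unfolding Lop_def using W b f by (intro pder_sum) (auto intro: smooth_mult smooth_pder)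
    thus ?thesis using b f by (simp add: pder_mult smooth_sdiff smooth_pder)
  qed
  have "Lop W a (Lop W b f) p = (\<Sum>w\<in>W. a w p * (\<Sum>v\<in>W. b v p * pder w (pder v f) p + pder w (b v) p * pder v f p))"
    unfolding Lop_def[of W a "Lop W b f"] using inner by simp
  also have "\<dots> = (\<Sum>w\<in>W. \<Sum>v\<in>W. a w p * (b v p * pder w (pder v f) p)) + (\<Sum>w\<in>W. \<Sum>v\<in>W. a w p * pder w (b v) p * pder v f p)"
    by (simp add: sum_distrib_left distrib_left sum.distrib mult.assoc)
  also have "(\<Sum>w\<in>W. \<Sum>v\<in>W. a w p * pder w (b v) p * pder v f p) = (\<Sum>v\<in>W. \<Sum>w\<in>W. a w p * pder w (b v) p * pder v f p)"
    by (rule sum.swap)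
  also have "\<dots> = (\<Sum>v\<in>W. Lop W a (b v) p * pder v f p)"
    unfolding Lop_def by (simp add: sum_distrib_right)
  finally show ?thesis by simp
qed

lemma Lop_cD:
  assumes "sh \<nu> v \<in> W" "finite W"
  shows "Lop W (cD \<mu>) (cD \<nu> v) p = (case v of Xv _ \<Rightarrow> 0 | Uv \<alpha> i \<Rightarrow> of_real (p (Uv \<alpha> (incr (incr i \<nu>) \<mu>))))"
proof (cases v)
  case (Xv \<kappa>)
  thus ?thesis unfolding Lop_def cD_def[of \<nu>] by (simp add: pder_const)
next
  case (Uv \<alpha> i)
  have u: "Uv \<alpha> (incr i \<nu>) \<in> W" using assms Uv by (simp add: sh_def)
  have "Lop W (cD \<mu>) (cD \<nu> v) p = (\<Sum>w\<in>W. if w = Uv \<alpha> (incr i \<nu>) then cD \<mu> w p else 0)"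
    unfolding Lop_def cD_def[of \<nu>] Uv by (intro sum.cong) (auto simp: pder_coord)
  also have "\<dots> = cD \<mu> (Uv \<alpha> (incr i \<nu>)) p" using u assms(2) by simp
  finally show ?thesis using Uv by (simp add: cD_def)
qed

lemma Dtot_comm:
  fixes f :: "('a, 'f::real_normed_field) fn"
  assumes f: "f \<in> Aalg m" and \<mu>: "\<mu> < m" and \<nu>: "\<nu> < m"
  shows "Dtot m \<mu> (Dtot m \<nu> f) = Dtot m \<nu> (Dtot m \<mu> f)"
proof -
  obtain S where sf: "smooth_fn f" and fS: "finite S" and vS: "\<forall>v\<in>S. valid_var m v" and d: "depends_only S f"
    using f by (rule AalgE)
  define W where "W = S \<union> sh \<mu> ` S \<union> sh \<nu> ` S"
  have fW: "finite W" using fS unfolding W_def by simp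
  have vW: "\<forall>v\<in>W. valid_var m v" using vS \<mu> \<nu> sh_valid unfolding W_def by auto
  have SW: "S \<subseteq> W" unfolding W_def by blast
  have e1: "Dtot m \<kappa> f = Lop W (cD \<kappa>) f" for \<kappa> by (rule Dtot_Lop[OF d vS fW SW])
  have e2: "Dtot m \<mu> (Dtot m \<nu> f) = Lop W (cD \<mu>) (Lop W (cD \<nu>) f)"
  proof -
    have "depends_only W (Dtot m \<nu> f)"
      by (rule dep_mono[OF Dtot_dep[OF d vS fS]]) (auto simp: W_def)
    hence "Dtot m \<mu> (Dtot m \<nu> f) = Lop W (cD \<mu>) (Dtot m \<nu> f)" by (rule Dtot_Lop[OF _ vW fW order_refl])
    thus ?thesis unfolding e1 .
  qed
  have e3: "Dtot m \<nu> (Dtot m \<mu> f) = Lop W (cD \<nu>) (Lop W (cD \<mu>) f)"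
  proof -
    have "depends_only W (Dtot m \<mu> f)"
      by (rule dep_mono[OF Dtot_dep[OF d vS fS]]) (auto simp: W_def)
    hence "Dtot m \<nu> (Dtot m \<mu> f) = Lop W (cD \<nu>) (Dtot m \<mu> f)" by (rule Dtot_Lop[OF _ vW fW order_refl])
    thus ?thesis unfolding e1 .
  qed
  show ?thesis unfolding e2 e3
  proof (rule ext)
    fix p
    have A: "(\<Sum>v\<in>W. Lop W (cD \<mu>) (cD \<nu> v) p * pder v f p) = (\<Sum>v\<in>W. Lop W (cD \<nu>) (cD \<mu> v) p * pder v f p)"
    proof (rule sum.cong[OF refl])
      fix v assume "v \<in> W"
      show "Lop W (cD \<mu>) (cD \<nu> v) p * pder v f p = Lop W (cD \<nu>) (cD \<mu> v) p * pder v f p"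
      proof (cases "v \<in> S")
        case False thus ?thesis by (simp add: pder_zero[OF d False])
      next
        case True
        hence "sh \<nu> v \<in> W" "sh \<mu> v \<in> W" unfolding W_def by auto
        thus ?thesis using fW by (simp add: Lop_cD incr_comm split: jvar.split)
      qed
    qed
    have B: "(\<Sum>w\<in>W. \<Sum>v\<in>W. cD \<mu> w p * (cD \<nu> v p * pder w (pder v f) p)) =
             (\<Sum>w\<in>W. \<Sum>v\<in>W. cD \<nu> w p * (cD \<mu> v p * pder w (pder v f) p))"
    proof -
      have "(\<Sum>w\<in>W. \<Sum>v\<in>W. cD \<nu> w p * (cD \<mu> v p * pder w (pder v f) p)) =
            (\<Sum>v\<in>W. \<Sum>w\<in>W. cD \<nu> w p * (cD \<mu> v p * pder w (pder v f) p))" by (rule sum.swap)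
      also have "\<dots> = (\<Sum>v\<in>W. \<Sum>w\<in>W. cD \<mu> v p * (cD \<nu> w p * pder v (pder w f) p))"
        using pder_comm[OF sf] by (simp add: mult.left_commute)
      finally show ?thesis by simp
    qed
    show "Lop W (cD \<mu>) (Lop W (cD \<nu>) f) p = Lop W (cD \<nu>) (Lop W (cD \<mu>) f) p"
      by (simp only: Lop_Lop[OF fW cD_smooth cD_smooth sf] A B)
  qed
qed



lemma Dpow_Aalg: "f \<in> Aalg m \<Longrightarrow> \<mu> < m \<Longrightarrow> (Dtot m \<mu> ^^ n) f \<in> Aalg m"
  by (induction n) (auto intro: Dtot_Aalg)

lemma Dpow_comm: "f \<in> Aalg m \<Longrightarrow> \<mu> < m \<Longrightarrow> \<nu> < m \<Longrightarrow>
    Dtot m \<mu> ((Dtot m \<nu> ^^ n) f) = (Dtot m \<nu> ^^ n) (Dtot m \<mu> f)"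
proof (induction n)
  case 0 thus ?case by simp
next
  case (Suc n)
  have "Dtot m \<mu> ((Dtot m \<nu> ^^ Suc n) f) = Dtot m \<mu> (Dtot m \<nu> ((Dtot m \<nu> ^^ n) f))" by simp
  also have "\<dots> = Dtot m \<nu> (Dtot m \<mu> ((Dtot m \<nu> ^^ n) f))"
    using Suc.prems by (intro Dtot_comm Dpow_Aalg) auto
  also have "\<dots> = (Dtot m \<nu> ^^ Suc n) (Dtot m \<mu> f)" using Suc by simp
  finally show ?case .
qed

abbreviation FD :: "nat \<Rightarrow> nat list \<Rightarrow> (nat \<Rightarrow> nat) \<Rightarrow> ('a, 'f::real_normed_field) fn \<Rightarrow> ('a, 'f) fn" where
  "FD m ls j \<equiv> foldr (\<lambda>\<mu> g. (Dtot m \<mu> ^^ j \<mu>) \<circ> g) ls id"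

lemma FD_Cons: "FD m (\<nu> # ls) j f = (Dtot m \<nu> ^^ j \<nu>) (FD m ls j f)"
  by simp

lemma FD_Aalg: "set ls \<subseteq> {..<m} \<Longrightarrow> f \<in> Aalg m \<Longrightarrow> FD m ls j f \<in> Aalg m"
  by (induction ls) (auto intro: Dpow_Aalg)

lemma FD_cong: "(\<And>\<nu>. \<nu> \<in> set ls \<Longrightarrow> j \<nu> = j' \<nu>) \<Longrightarrow> FD m ls j f = FD m ls j' f"
  by (induction ls) auto

lemma FD_incr: "distinct ls \<Longrightarrow> set ls \<subseteq> {..<m} \<Longrightarrow> \<mu> \<in> set ls \<Longrightarrow> f \<in> Aalg m \<Longrightarrow>
    Dtot m \<mu> (FD m ls j f) = FD m ls (incr j \<mu>) f"
proof (induction ls)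
  case Nil thus ?case by simp
next
  case (Cons \<nu> ls)
  show ?case
  proof (cases "\<nu> = \<mu>")
    case True
    hence nm: "\<mu> \<notin> set ls" using Cons.prems by simp
    have "FD m ls (incr j \<mu>) f = FD m ls j f"
      by (rule FD_cong) (use nm in \<open>auto simp: incr_def\<close>)
    moreover have "incr j \<mu> \<mu> = Suc (j \<mu>)" by (simp add: incr_def)
    ultimately have "(Dtot m \<mu> ^^ incr j \<mu> \<mu>) (FD m ls (incr j \<mu>) f) = Dtot m \<mu> ((Dtot m \<mu> ^^ j \<mu>) (FD m ls j f))"
      by simp
    thus ?thesis using True by (simp only: FD_Cons)
  next
    case False
    have "Dtot m \<mu> (FD m (\<nu> # ls) j f) = Dtot m \<mu> ((Dtot m \<nu> ^^ j \<nu>) (FD m ls j f))" by simp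
    also have "\<dots> = (Dtot m \<nu> ^^ j \<nu>) (Dtot m \<mu> (FD m ls j f))"
      using Cons.prems by (intro Dpow_comm FD_Aalg) auto
    also have "\<dots> = (Dtot m \<nu> ^^ j \<nu>) (FD m ls (incr j \<mu>) f)"
      using Cons.prems False by (subst Cons.IH) auto
    also have "\<dots> = FD m (\<nu> # ls) (incr j \<mu>) f" using False by (simp add: incr_def)
    finally show ?thesis .
  qed
qed

lemma Dmulti_FD: "Dmulti m j = FD m [0..<m] j"
  unfolding Dmulti_def by simp

lemma Dmulti_Aalg: "f \<in> Aalg m \<Longrightarrow> Dmulti m j f \<in> Aalg m"
  unfolding Dmulti_FD by (rule FD_Aalg) auto

lemma Dmulti_incr: "\<mu> < m \<Longrightarrow> f \<in> Aalg m \<Longrightarrow> Dtot m \<mu> (Dmulti m j f) = Dmulti m (incr j \<mu>) f"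
  unfolding Dmulti_FD by (rule FD_incr) auto

lemma FD_zero_idx: "FD m ls (\<lambda>_. 0) f = f"
  by (induction ls) auto

lemma Dmulti_zero_idx: "Dmulti m (\<lambda>_. 0) f = f"
  unfolding Dmulti_FD by (rule FD_zero_idx)

lemma Dpow_zero: "(Dtot m \<mu> ^^ n) (\<lambda>p. 0) = (\<lambda>p. 0)"
  by (induction n) (auto simp: Dtot_zero)

lemma FD_zero_fn: "FD m ls j (\<lambda>p. 0) = (\<lambda>p. 0)"
  by (induction ls) (auto simp: Dpow_zero)

lemma Dmulti_zero_fn: "Dmulti m j (\<lambda>p. 0) = (\<lambda>p. 0)"
  unfolding Dmulti_FD by (rule FD_zero_fn)



lemma mle_incr: "\<mu> < m \<Longrightarrow> mle m k (incr i \<mu>) \<longleftrightarrow> (\<forall>\<nu><m. \<nu> \<noteq> \<mu> \<longrightarrow> k \<nu> \<le> i \<nu>) \<and> k \<mu> \<le> Suc (i \<mu>)"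
  unfolding mle_def incr_def by auto

lemma prod_split: "\<mu> < (m::nat) \<Longrightarrow> (\<Prod>\<nu><m. f \<nu>) = f \<mu> * (\<Prod>\<nu>\<in>{..<m}-{\<mu>}. f \<nu>)"
  by (rule prod.remove) auto

lemma sum_split: "\<mu> < (m::nat) \<Longrightarrow> (\<Sum>\<nu><m. f \<nu>) = f \<mu> + (\<Sum>\<nu>\<in>{..<m}-{\<mu>}. f \<nu>)"
  by (rule sum.remove) auto

lemma mabs_incr: "\<mu> < m \<Longrightarrow> mabs m (incr i \<mu>) = Suc (mabs m i)"
proof -
  assume \<mu>: "\<mu> < m"
  have "mabs m (incr i \<mu>) = incr i \<mu> \<mu> + (\<Sum>\<nu>\<in>{..<m}-{\<mu>}. incr i \<mu> \<nu>)"
    unfolding mabs_def by (rule sum_split[OF \<mu>])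
  also have "(\<Sum>\<nu>\<in>{..<m}-{\<mu>}. incr i \<mu> \<nu>) = (\<Sum>\<nu>\<in>{..<m}-{\<mu>}. i \<nu>)"
    by (rule sum.cong) (auto simp: incr_def)
  also have "mabs m i = i \<mu> + (\<Sum>\<nu>\<in>{..<m}-{\<mu>}. i \<nu>)"
    unfolding mabs_def by (rule sum_split[OF \<mu>])
  moreover have "incr i \<mu> \<mu> = Suc (i \<mu>)" by (simp add: incr_def)
  ultimately show ?thesis by simp
qed

lemma mabs_dec: "\<mu> < m \<Longrightarrow> k \<mu> > 0 \<Longrightarrow> Suc (mabs m (k(\<mu> := k \<mu> - 1))) = mabs m k"
proof -
  assume \<mu>: "\<mu> < m" and k: "k \<mu> > 0"
  have "incr (k(\<mu> := k \<mu> - 1)) \<mu> = k" using k unfolding incr_def by (auto simp: fun_eq_iff)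
  thus ?thesis using mabs_incr[OF \<mu>, of "k(\<mu> := k \<mu> - 1)"] by simp
qed

lemma mle_mabs_less:
  assumes "k \<in> multi_idx m" "i \<in> multi_idx m" "mle m k i" "k \<noteq> i"
  shows "mabs m k < mabs m i"
proof -
  obtain \<nu> where "k \<nu> \<noteq> i \<nu>" using assms(4) by (auto simp: fun_eq_iff)
  moreover have "\<nu> < m"
  proof (rule ccontr)
    assume "\<not> \<nu> < m" thus False using assms(1,2) \<open>k \<nu> \<noteq> i \<nu>\<close> by (auto simp: multi_idx_def)
  qed
  ultimately have "\<exists>\<nu>\<in>{..<m}. k \<nu> < i \<nu>" using assms(3) unfolding mle_def
    by (metis le_neq_implies_less lessThan_iff)
  thus ?thesis unfolding mabs_def using assms(3) unfolding mle_def
    by (intro sum_strict_mono_ex1) auto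
qed

lemma mchoose_self: "mchoose m i i = 1"
  unfolding mchoose_def by simp

lemma msub_self: "msub i i = (\<lambda>_. 0)"
  unfolding msub_def by simp

lemma mle_refl: "mle m i i"
  unfolding mle_def by simp

lemma eps_diag: "i \<in> multi_idx m \<Longrightarrow> eps m i \<phi> \<alpha> i = \<phi> \<alpha>"
  unfolding eps_def by (simp add: mle_refl mchoose_self msub_self Dmulti_zero_idx)

lemma eps_VD: "(\<And>\<alpha>. \<phi> \<alpha> \<in> Aalg m) \<Longrightarrow> eps m k \<phi> \<in> VD m"
  unfolding VD_def eps_def
  by (auto intro!: Aalg_mult Aalg_const Dmulti_Aalg Aalg_const[of 0])



lemma mchoose_split: "\<mu> < m \<Longrightarrow> mchoose m i k = (i \<mu> choose k \<mu>) * (\<Prod>\<nu>\<in>{..<m}-{\<mu>}. i \<nu> choose k \<nu>)"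
  unfolding mchoose_def by (rule prod_split)

lemma bracket_eps:
  fixes \<phi> :: "'a \<Rightarrow> ('a, 'f::real_normed_field) fn"
  assumes \<mu>: "\<mu> < m" and \<phi>: "\<And>\<alpha>. \<phi> \<alpha> \<in> Aalg m"
  shows "bracket m \<mu> (eps m k \<phi>) \<alpha> i p = (if k \<mu> = 0 then 0 else - eps m (k(\<mu> := k \<mu> - 1)) \<phi> \<alpha> i p)"
proof (cases "i \<in> multi_idx m")
  case False thus ?thesis by (simp add: bracket_def eps_def)
next
  case True
  define k' where "k' = k(\<mu> := k \<mu> - 1)"
  define R where "R = (\<Prod>\<nu>\<in>{..<m}-{\<mu>}. i \<nu> choose k \<nu>)"
  have iI: "incr i \<mu> \<in> multi_idx m" using incr_multi True \<mu> by blast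
  have Rk: "mchoose m i k = (i \<mu> choose k \<mu>) * R" unfolding R_def by (rule mchoose_split[OF \<mu>])
  have Rik: "mchoose m (incr i \<mu>) k = (Suc (i \<mu>) choose k \<mu>) * R"
  proof -
    have "mchoose m (incr i \<mu>) k = (incr i \<mu> \<mu> choose k \<mu>) * (\<Prod>\<nu>\<in>{..<m}-{\<mu>}. incr i \<mu> \<nu> choose k \<nu>)"
      by (rule mchoose_split[OF \<mu>])
    also have "(\<Prod>\<nu>\<in>{..<m}-{\<mu>}. incr i \<mu> \<nu> choose k \<nu>) = R"
      unfolding R_def by (rule prod.cong) (auto simp: incr_def)
    moreover have h: "incr i \<mu> \<mu> = Suc (i \<mu>)" by (simp add: incr_def)
    ultimately show ?thesis by (simp only: h)
  qed
  have Rk': "mchoose m i k' = (i \<mu> choose (k \<mu> - 1)) * R"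
  proof -
    have "mchoose m i k' = (i \<mu> choose k' \<mu>) * (\<Prod>\<nu>\<in>{..<m}-{\<mu>}. i \<nu> choose k' \<nu>)"
      by (rule mchoose_split[OF \<mu>])
    also have "(\<Prod>\<nu>\<in>{..<m}-{\<mu>}. i \<nu> choose k' \<nu>) = R"
      unfolding R_def by (rule prod.cong) (auto simp: k'_def)
    moreover have h: "k' \<mu> = k \<mu> - 1" by (simp add: k'_def)
    ultimately show ?thesis by (simp only: h)
  qed
  have br: "bracket m \<mu> (eps m k \<phi>) \<alpha> i p = Dtot m \<mu> (eps m k \<phi> \<alpha> i) p - eps m k \<phi> \<alpha> (incr i \<mu>) p"
    by (simp add: bracket_def True)
  have DA: "Dmulti m j (\<phi> \<alpha>) \<in> Aalg m" for j by (rule Dmulti_Aalg[OF \<phi>])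
  have msk': "msub i k' = msub (incr i \<mu>) k" if "k \<mu> > 0" "k \<mu> \<le> Suc (i \<mu>)"
    using that unfolding msub_def incr_def k'_def by (auto simp: fun_eq_iff)
  show ?thesis
  proof (cases "mle m k i")
    case a: True
    have kle: "k \<mu> \<le> i \<mu>" using a \<mu> unfolding mle_def by auto
    have mi: "mle m k (incr i \<mu>)" using a \<mu> unfolding mle_incr[OF \<mu>] unfolding mle_def by auto
    have ms: "msub (incr i \<mu>) k = incr (msub i k) \<mu>"
      using kle unfolding msub_def incr_def by (auto simp: fun_eq_iff)
    define X where "X = Dmulti m (msub (incr i \<mu>) k) (\<phi> \<alpha>) p"
    have e1: "Dtot m \<mu> (eps m k \<phi> \<alpha> i) p = of_nat (mchoose m i k) * X"
    proof -
      have "eps m k \<phi> \<alpha> i = (\<lambda>p. of_nat (mchoose m i k) * Dmulti m (msub i k) (\<phi> \<alpha>) p)"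
        using True a by (simp add: eps_def)
      hence "Dtot m \<mu> (eps m k \<phi> \<alpha> i) = (\<lambda>p. of_nat (mchoose m i k) * Dtot m \<mu> (Dmulti m (msub i k) (\<phi> \<alpha>)) p)"
        by (simp add: Dtot_cmult[OF DA])
      thus ?thesis unfolding X_def ms by (simp add: Dmulti_incr[OF \<mu> \<phi>])
    qed
    have e2: "eps m k \<phi> \<alpha> (incr i \<mu>) p = of_nat (mchoose m (incr i \<mu>) k) * X"
      using iI mi unfolding X_def by (simp add: eps_def)
    show ?thesis
    proof (cases "k \<mu> = 0")
      case True thus ?thesis using br e1 e2 Rk Rik by simp
    next
      case False
      then obtain r where r: "k \<mu> = Suc r" by (cases "k \<mu>") auto
      have "mchoose m (incr i \<mu>) k = mchoose m i k' + mchoose m i k"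
        using Rik Rk Rk' r by (simp add: algebra_simps)
      moreover have "mle m k' i" using a unfolding mle_def k'_def by auto
      moreover have "msub i k' = msub (incr i \<mu>) k" using msk' r kle by simp
      ultimately have "eps m k' \<phi> \<alpha> i p = of_nat (mchoose m (incr i \<mu>) k) * X - of_nat (mchoose m i k) * X"
        using True unfolding X_def by (simp add: eps_def algebra_simps)
      thus ?thesis using br e1 e2 False k'_def by simp
    qed
  next
    case na: False
    show ?thesis
    proof (cases "mle m k (incr i \<mu>)")
      case b: True
      have kmu: "k \<mu> = Suc (i \<mu>)"
      proof -
        have h: "\<forall>\<nu><m. \<nu> \<noteq> \<mu> \<longrightarrow> k \<nu> \<le> i \<nu>" "k \<mu> \<le> Suc (i \<mu>)" using b mle_incr[OF \<mu>] by auto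
        from na obtain \<nu> where "\<nu> < m" "\<not> k \<nu> \<le> i \<nu>" unfolding mle_def by auto
        with h(1) have "\<nu> = \<mu>" by auto
        thus ?thesis using h(2) \<open>\<not> k \<nu> \<le> i \<nu>\<close> by simp
      qed
      have z: "eps m k \<phi> \<alpha> i = (\<lambda>_. 0)" using na by (simp add: eps_def)
      have e2: "eps m k \<phi> \<alpha> (incr i \<mu>) p = of_nat (mchoose m (incr i \<mu>) k) * Dmulti m (msub (incr i \<mu>) k) (\<phi> \<alpha>) p"
        using iI b by (simp add: eps_def)
      have "mle m k' i" using b mle_incr[OF \<mu>] kmu unfolding mle_def k'_def by auto
      moreover have "msub i k' = msub (incr i \<mu>) k" using msk' kmu by simp
      moreover have "mchoose m i k' = mchoose m (incr i \<mu>) k" using Rk' Rik kmu by simp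
      ultimately have "eps m k' \<phi> \<alpha> i p = eps m k \<phi> \<alpha> (incr i \<mu>) p"
        using True e2 by (simp add: eps_def)
      thus ?thesis using br z kmu k'_def by (simp add: Dtot_zero)
    next
      case c: False
      have z: "eps m k \<phi> \<alpha> i = (\<lambda>_. 0)" using na by (simp add: eps_def)
      have z2: "eps m k \<phi> \<alpha> (incr i \<mu>) = (\<lambda>_. 0)" using c by (simp add: eps_def)
      have "\<not> mle m k' i" if k0: "k \<mu> \<noteq> 0"
      proof
        assume ml: "mle m k' i"
        have "\<forall>\<nu><m. \<nu> \<noteq> \<mu> \<longrightarrow> k \<nu> \<le> i \<nu>" using ml unfolding mle_def k'_def by auto
        moreover have "k \<mu> \<le> Suc (i \<mu>)" using ml \<mu> k0 unfolding mle_def k'_def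
          by (metis fun_upd_same Suc_pred' not_gr_zero Suc_le_mono)
        ultimately show False using c mle_incr[OF \<mu>] by auto
      qed
      hence "k \<mu> \<noteq> 0 \<Longrightarrow> eps m k' \<phi> \<alpha> i p = 0" by (simp add: eps_def)
      thus ?thesis using br z z2 k'_def by (simp add: Dtot_zero)
    qed
  qed
qed



lemma bracket_zero: "bracket m \<mu> (\<lambda>\<alpha> i p. 0 :: 'f::real_normed_field) = (\<lambda>\<alpha> i p. 0)"
  unfolding bracket_def by (auto simp: Dtot_zero fun_eq_iff)

lemma VD_zero: "(\<lambda>\<alpha> i p. 0) \<in> VD m"
  unfolding VD_def using Aalg_const[of 0] by auto

lemma Epre_zero: "(\<lambda>\<alpha> i p. 0 :: 'f::real_normed_field) \<in> Epre m q"
  by (induction q) (auto simp: VD_zero bracket_zero)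

lemma VD_diff: "\<zeta> \<in> VD m \<Longrightarrow> \<eta> \<in> VD m \<Longrightarrow> (\<lambda>\<alpha> i p. \<zeta> \<alpha> i p - \<eta> \<alpha> i p :: 'f::real_normed_field) \<in> VD m"
  unfolding VD_def by (auto intro: Aalg_diff)

lemma bracket_diff:
  assumes "\<zeta> \<in> VD m" "\<eta> \<in> VD m"
  shows "bracket m \<mu> (\<lambda>\<alpha> i p. \<zeta> \<alpha> i p - \<eta> \<alpha> i p :: 'f::real_normed_field) =
         (\<lambda>\<alpha> i p. bracket m \<mu> \<zeta> \<alpha> i p - bracket m \<mu> \<eta> \<alpha> i p)"
proof (intro ext)
  fix \<alpha> i p
  show "bracket m \<mu> (\<lambda>\<alpha> i p. \<zeta> \<alpha> i p - \<eta> \<alpha> i p) \<alpha> i p = bracket m \<mu> \<zeta> \<alpha> i p - bracket m \<mu> \<eta> \<alpha> i p"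
  proof (cases "i \<in> multi_idx m")
    case True
    hence "\<zeta> \<alpha> i \<in> Aalg m" "\<eta> \<alpha> i \<in> Aalg m" using assms unfolding VD_def by auto
    thus ?thesis using True unfolding bracket_def by (simp add: Dtot_diff)
  next
    case False thus ?thesis unfolding bracket_def by simp
  qed
qed

lemma Epre_VD: "\<zeta> \<in> Epre m (Suc q) \<Longrightarrow> \<zeta> \<in> VD m"
  by simp

lemma Epre_diff: "\<zeta> \<in> Epre m q \<Longrightarrow> \<eta> \<in> Epre m q \<Longrightarrow> (\<lambda>\<alpha> i p. \<zeta> \<alpha> i p - \<eta> \<alpha> i p :: 'f::real_normed_field) \<in> Epre m q"
proof (induction q arbitrary: \<zeta> \<eta>)
  case 0 thus ?case by simp
next
  case (Suc q)
  have v: "\<zeta> \<in> VD m" "\<eta> \<in> VD m" using Suc.prems by auto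
  show ?case
    using Suc.prems Suc.IH by (simp add: VD_diff[OF v] bracket_diff[OF v])
qed

lemma Epre_neg: "\<zeta> \<in> Epre m q \<Longrightarrow> (\<lambda>\<alpha> i p. - \<zeta> \<alpha> i p :: 'f::real_normed_field) \<in> Epre m q"
  using Epre_diff[OF Epre_zero, of \<zeta> m q] by simp

lemma Epre_add: "\<zeta> \<in> Epre m q \<Longrightarrow> \<eta> \<in> Epre m q \<Longrightarrow> (\<lambda>\<alpha> i p. \<zeta> \<alpha> i p + \<eta> \<alpha> i p :: 'f::real_normed_field) \<in> Epre m q"
  using Epre_diff[of \<zeta> m q "\<lambda>\<alpha> i p. - \<eta> \<alpha> i p"] Epre_neg[of \<eta> m q] by simp

lemma Epre_sum: "finite K \<Longrightarrow> (\<And>k. k \<in> K \<Longrightarrow> F k \<in> Epre m q) \<Longrightarrow>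
    (\<lambda>\<alpha> i p. \<Sum>k\<in>K. F k \<alpha> i p :: 'f::real_normed_field) \<in> Epre m q"
proof (induction K rule: finite_induct)
  case empty thus ?case using Epre_zero by simp
next
  case (insert x K)
  thus ?case using Epre_add[of "F x" m q "\<lambda>\<alpha> i p. \<Sum>k\<in>K. F k \<alpha> i p"] by simp
qed

lemma eps_Epre:
  fixes \<phi> :: "'a \<Rightarrow> ('a, 'f::real_normed_field) fn"
  assumes \<phi>: "\<And>\<alpha>. \<phi> \<alpha> \<in> Aalg m"
  shows "k \<in> multi_idx m \<Longrightarrow> mabs m k \<le> q \<Longrightarrow> eps m k \<phi> \<in> Epre m (Suc q)"
proof (induction q arbitrary: k)
  case 0
  have "bracket m \<mu> (eps m k \<phi>) = (\<lambda>\<alpha> i p. 0)" if \<mu>: "\<mu> < m" for \<mu>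
  proof -
    have "k \<mu> \<le> mabs m k" unfolding mabs_def using \<mu> by (intro member_le_sum) auto
    hence "k \<mu> = 0" using 0 by simp
    thus ?thesis by (simp add: fun_eq_iff bracket_eps[OF \<mu> \<phi>])
  qed
  thus ?case by (simp add: eps_VD[OF \<phi>] Epre_zero)
next
  case (Suc q)
  have "bracket m \<mu> (eps m k \<phi>) \<in> Epre m (Suc q)" if \<mu>: "\<mu> < m" for \<mu>
  proof (cases "k \<mu> = 0")
    case True
    hence "bracket m \<mu> (eps m k \<phi>) = (\<lambda>\<alpha> i p. 0)" by (simp add: fun_eq_iff bracket_eps[OF \<mu> \<phi>])
    thus ?thesis using Epre_zero[of m "Suc q"] by (simp del: Epre.simps)
  next
    case False
    define k' where "k' = k(\<mu> := k \<mu> - 1)"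
    have "Suc (mabs m k') = mabs m k" unfolding k'_def using mabs_dec[OF \<mu>] False by simp
    hence a1: "mabs m k' \<le> q" using Suc.prems by simp
    have a2: "k' \<in> multi_idx m" using Suc.prems \<mu> unfolding k'_def multi_idx_def by auto
    have "eps m k' \<phi> \<in> Epre m (Suc q)" by (rule Suc.IH[OF a2 a1])
    hence "(\<lambda>\<alpha> i p. - eps m k' \<phi> \<alpha> i p) \<in> Epre m (Suc q)" by (rule Epre_neg)
    moreover have "bracket m \<mu> (eps m k \<phi>) = (\<lambda>\<alpha> i p. - eps m k' \<phi> \<alpha> i p)"
      using False by (simp add: fun_eq_iff bracket_eps[OF \<mu> \<phi>] k'_def)
    ultimately show ?thesis by (simp del: Epre.simps)
  qed
  moreover have "eps m k \<phi> \<in> VD m" by (rule eps_VD) (rule \<phi>)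
  ultimately show ?case by (subst Epre.simps(2)) blast
qed



lemma finite_Kset: "finite (Kset m q)"
proof -
  define g where "g f = (\<lambda>\<nu>. if \<nu> < m then f \<nu> else (0::nat))" for f :: "nat \<Rightarrow> nat"
  have "Kset m q \<subseteq> g ` ({..<m} \<rightarrow>\<^sub>E {..q})"
  proof
    fix k assume k: "k \<in> Kset m q"
    have "k = g (restrict k {..<m})" using k by (auto simp: g_def Kset_def multi_idx_def fun_eq_iff)
    moreover have "restrict k {..<m} \<in> {..<m} \<rightarrow>\<^sub>E {..q}"
    proof
      fix \<nu> assume \<nu>: "\<nu> \<in> {..<m}"
      have "k \<nu> \<le> mabs m k" unfolding mabs_def using \<nu> by (intro member_le_sum) auto
      thus "restrict k {..<m} \<nu> \<in> {..q}" using k \<nu> by (simp add: Kset_def)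
    qed auto
    ultimately show "k \<in> g ` ({..<m} \<rightarrow>\<^sub>E {..q})" by blast
  qed
  moreover have "finite (g ` ({..<m} \<rightarrow>\<^sub>E {..q}))" by (intro finite_imageI finite_PiE) auto
  ultimately show ?thesis by (rule finite_subset)
qed

lemma eps_sum_Ecal:
  assumes "\<forall>k \<alpha>. \<Phi> k \<alpha> \<in> Aalg m"
  shows "eps_sum m q \<Phi> \<in> Ecal m q"
proof -
  have "(\<lambda>\<alpha> i p. \<Sum>k\<in>Kset m q. eps m k (\<Phi> k) \<alpha> i p) \<in> Epre m (Suc q)"
  proof (rule Epre_sum[OF finite_Kset])
    fix k assume "k \<in> Kset m q"
    thus "eps m k (\<Phi> k) \<in> Epre m (Suc q)"
      using assms by (intro eps_Epre) (auto simp: Kset_def)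
  qed
  thus ?thesis unfolding eps_sum_def Ecal_def .
qed

lemma eps_sum_Aalg:
  assumes "\<forall>k \<alpha>. \<Phi> k \<alpha> \<in> Aalg m" "i \<in> multi_idx m"
  shows "eps_sum m q \<Phi> \<alpha> i \<in> Aalg m"
proof -
  have "(\<lambda>p. \<Sum>k\<in>Kset m q. eps m k (\<Phi> k) \<alpha> i p) \<in> Aalg m"
  proof (rule Aalg_sum[OF finite_Kset])
    fix k
    have "eps m k (\<Phi> k) \<in> VD m" by (rule eps_VD) (use assms in auto)
    thus "eps m k (\<Phi> k) \<alpha> i \<in> Aalg m" using assms(2) unfolding VD_def by blast
  qed
  thus ?thesis unfolding eps_sum_def .
qed

lemma exists_pos:
  assumes "mabs m i > 0"
  obtains \<mu> where "\<mu> < m" "i \<mu> > 0"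
proof -
  have "\<exists>\<mu><m. i \<mu> > 0"
  proof (rule ccontr)
    assume "\<not> (\<exists>\<mu><m. i \<mu> > 0)"
    hence "mabs m i = 0" unfolding mabs_def by simp
    thus False using assms by simp
  qed
  thus ?thesis using that by blast
qed

lemma vanish:
  "\<zeta> \<in> Epre m q \<Longrightarrow> (\<And>\<alpha> i. i \<in> multi_idx m \<Longrightarrow> mabs m i < q \<Longrightarrow> \<zeta> \<alpha> i = (\<lambda>_. 0))
   \<Longrightarrow> \<zeta> = (\<lambda>\<alpha> i p. 0 :: 'f::real_normed_field)"
proof (induction q arbitrary: \<zeta>)
  case 0 thus ?case by simp
next
  case (Suc q)
  have VD: "\<zeta> \<in> VD m" and brk: "\<And>\<mu>. \<mu> < m \<Longrightarrow> bracket m \<mu> \<zeta> \<in> Epre m q" using Suc.prems by auto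
  have bz: "bracket m \<mu> \<zeta> = (\<lambda>\<alpha> i p. 0)" if \<mu>: "\<mu> < m" for \<mu>
  proof (rule Suc.IH[OF brk[OF \<mu>]])
    fix \<alpha> i assume i: "i \<in> multi_idx m" "mabs m i < q"
    have "\<zeta> \<alpha> i = (\<lambda>_. 0)" using i by (intro Suc.prems(2)) auto
    moreover have "\<zeta> \<alpha> (incr i \<mu>) = (\<lambda>_. 0)"
      using i Suc.prems(2)[of "incr i \<mu>"] incr_multi[OF i(1) \<mu>] mabs_incr[OF \<mu>] by simp
    ultimately show "bracket m \<mu> \<zeta> \<alpha> i = (\<lambda>_. 0)" using i by (simp add: bracket_def Dtot_zero)
  qed
  have rec: "\<zeta> \<alpha> (incr i \<mu>) = Dtot m \<mu> (\<zeta> \<alpha> i)" if "i \<in> multi_idx m" "\<mu> < m" for \<alpha> i \<mu>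
  proof (rule ext)
    fix p
    have "bracket m \<mu> \<zeta> \<alpha> i p = 0" using bz[OF that(2)] by simp
    thus "\<zeta> \<alpha> (incr i \<mu>) p = Dtot m \<mu> (\<zeta> \<alpha> i) p" using that by (simp add: bracket_def)
  qed
  have all: "\<forall>i. i \<in> multi_idx m \<longrightarrow> mabs m i = n \<longrightarrow> \<zeta> \<alpha> i = (\<lambda>_. 0)" for n \<alpha>
  proof (induction n)
    case 0 show ?case using Suc.prems(2) by simp
  next
    case (Suc n)
    show ?case
    proof (intro allI impI)
      fix i assume i: "i \<in> multi_idx m" "mabs m i = Suc n"
      obtain \<mu> where \<mu>: "\<mu> < m" "i \<mu> > 0" using exists_pos[of m i] i by auto
      define i' where "i' = i(\<mu> := i \<mu> - 1)"
      have ii: "incr i' \<mu> = i" using \<mu> unfolding i'_def incr_def by (auto simp: fun_eq_iff)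
      have i'I: "i' \<in> multi_idx m" using i \<mu> unfolding i'_def multi_idx_def by auto
      have "Suc (mabs m i') = mabs m i" unfolding i'_def by (rule mabs_dec[of \<mu> m i, OF \<mu>])
      hence "mabs m i' = n" using i by simp
      hence "\<zeta> \<alpha> i' = (\<lambda>_. 0)" using Suc.IH i'I by simp
      hence "\<zeta> \<alpha> (incr i' \<mu>) = (\<lambda>_. 0)" using rec[OF i'I \<mu>(1)] by (simp add: Dtot_zero)
      thus "\<zeta> \<alpha> i = (\<lambda>_. 0)" using ii by simp
    qed
  qed
  show ?case
  proof (intro ext)
    fix \<alpha> i p
    show "\<zeta> \<alpha> i p = 0"
    proof (cases "i \<in> multi_idx m")
      case True
      have "\<zeta> \<alpha> i = (\<lambda>_. 0)" using all[of "mabs m i" \<alpha>] True by simp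
      thus ?thesis by simp
    next
      case False thus ?thesis using VD unfolding VD_def by auto
    qed
  qed
qed



lemma eps_zero_fn: "eps m k (\<lambda>\<alpha> p. 0 :: 'f::real_normed_field) \<alpha> i p = 0"
  unfolding eps_def by (simp add: Dmulti_zero_fn)

lemma eps_sum_split:
  assumes "i \<in> Kset m q"
  shows "eps_sum m q \<Phi> \<alpha> i p = eps m i (\<Phi> i) \<alpha> i p + (\<Sum>k\<in>Kset m q - {i}. eps m k (\<Phi> k) \<alpha> i p)"
  unfolding eps_sum_def using assms finite_Kset by (simp add: sum.remove)

lemma construct:
  fixes \<zeta> :: "('a, 'f::real_normed_field) vfield"
  assumes \<zeta>: "\<zeta> \<in> VD m"
  shows "n \<le> Suc q \<Longrightarrow> \<exists>\<Phi>. (\<forall>k \<alpha>. \<Phi> k \<alpha> \<in> Aalg m) \<and> (\<forall>k. n \<le> mabs m k \<longrightarrow> \<Phi> k = (\<lambda>\<alpha> p. 0))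
     \<and> (\<forall>\<alpha> i. i \<in> multi_idx m \<longrightarrow> mabs m i < n \<longrightarrow> eps_sum m q \<Phi> \<alpha> i = \<zeta> \<alpha> i)"
proof (induction n)
  case 0
  show ?case by (rule exI[of _ "\<lambda>k \<alpha> p. 0"]) (simp add: Aalg_const)
next
  case (Suc n)
  then obtain \<Phi> where A: "\<forall>k \<alpha>. \<Phi> k \<alpha> \<in> Aalg m" and Z: "\<forall>k. n \<le> mabs m k \<longrightarrow> \<Phi> k = (\<lambda>\<alpha> p. 0)"
    and E: "\<forall>\<alpha> i. i \<in> multi_idx m \<longrightarrow> mabs m i < n \<longrightarrow> eps_sum m q \<Phi> \<alpha> i = \<zeta> \<alpha> i" by auto
  define \<Phi>' where "\<Phi>' k = (if k \<in> multi_idx m \<and> mabs m k = n then (\<lambda>\<alpha> p. \<zeta> \<alpha> k p - eps_sum m q \<Phi> \<alpha> k p) else \<Phi> k)" for k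
  have A': "\<forall>k \<alpha>. \<Phi>' k \<alpha> \<in> Aalg m"
  proof (intro allI)
    fix k \<alpha>
    show "\<Phi>' k \<alpha> \<in> Aalg m"
    proof (cases "k \<in> multi_idx m \<and> mabs m k = n")
      case True
      have "\<zeta> \<alpha> k \<in> Aalg m" using \<zeta> True unfolding VD_def by blast
      moreover have "eps_sum m q \<Phi> \<alpha> k \<in> Aalg m" using A True by (intro eps_sum_Aalg) auto
      ultimately show ?thesis using True unfolding \<Phi>'_def by (simp add: Aalg_diff)
    next
      case False
      have "\<Phi>' k = \<Phi> k" unfolding \<Phi>'_def by (rule if_not_P[OF False])
      thus ?thesis using A by simp
    qed
  qed
  have Z': "\<forall>k. Suc n \<le> mabs m k \<longrightarrow> \<Phi>' k = (\<lambda>\<alpha> p. 0)" using Z unfolding \<Phi>'_def by auto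
  have E': "\<forall>\<alpha> i. i \<in> multi_idx m \<longrightarrow> mabs m i < Suc n \<longrightarrow> eps_sum m q \<Phi>' \<alpha> i = \<zeta> \<alpha> i"
  proof (intro allI impI ext)
    fix \<alpha> i p assume i: "i \<in> multi_idx m" "mabs m i < Suc n"
    have iK: "i \<in> Kset m q" using i Suc.prems unfolding Kset_def by simp
    have same: "eps m k (\<Phi>' k) \<alpha> i p = eps m k (\<Phi> k) \<alpha> i p" if k: "k \<in> Kset m q - {i}" for k
    proof (cases "k \<in> multi_idx m \<and> mabs m k = n")
      case False
      have "\<Phi>' k = \<Phi> k" unfolding \<Phi>'_def by (rule if_not_P[OF False])
      thus ?thesis by simp
    next
      case True
      have "\<Phi> k = (\<lambda>\<alpha> p. 0)" using Z True by simp
      hence 1: "eps m k (\<Phi> k) \<alpha> i p = 0" by (simp add: eps_zero_fn)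
      have "\<not> mle m k i"
      proof
        assume "mle m k i"
        hence "mabs m k < mabs m i" using True i k by (intro mle_mabs_less) auto
        thus False using True i by simp
      qed
      hence "eps m k (\<Phi>' k) \<alpha> i p = 0" unfolding eps_def by simp
      thus ?thesis using 1 by simp
    qed
    have S': "eps_sum m q \<Phi>' \<alpha> i p = \<Phi>' i \<alpha> p + (\<Sum>k\<in>Kset m q - {i}. eps m k (\<Phi> k) \<alpha> i p)"
    proof -
      have ss: "(\<Sum>k\<in>Kset m q - {i}. eps m k (\<Phi>' k) \<alpha> i p) = (\<Sum>k\<in>Kset m q - {i}. eps m k (\<Phi> k) \<alpha> i p)"
        by (rule sum.cong[OF refl]) (rule same)
      show ?thesis by (simp add: eps_sum_split[OF iK] eps_diag[OF i(1)] ss)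
    qed
    have S: "eps_sum m q \<Phi> \<alpha> i p = \<Phi> i \<alpha> p + (\<Sum>k\<in>Kset m q - {i}. eps m k (\<Phi> k) \<alpha> i p)"
      by (simp add: eps_sum_split[OF iK] eps_diag[OF i(1)])
    show "eps_sum m q \<Phi>' \<alpha> i p = \<zeta> \<alpha> i p"
    proof (cases "mabs m i = n")
      case True
      have "\<Phi> i \<alpha> p = 0" using Z True by simp
      moreover have "\<Phi>' i \<alpha> p = \<zeta> \<alpha> i p - eps_sum m q \<Phi> \<alpha> i p" using True i unfolding \<Phi>'_def by simp
      ultimately show ?thesis using S S' by simp
    next
      case False
      hence "mabs m i < n" using i by simp
      hence "eps_sum m q \<Phi> \<alpha> i p = \<zeta> \<alpha> i p" using E i by simp
      moreover have "\<Phi>' i = \<Phi> i" using False unfolding \<Phi>'_def by simp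
      ultimately show ?thesis using S S' by simp
    qed
  qed
  show ?case using A' Z' E' by blast
qed

lemma uniq:
  assumes eq: "eps_sum m q \<Phi> = (eps_sum m q \<Psi> :: ('a, 'f::real_normed_field) vfield)"
  shows "k \<in> Kset m q \<Longrightarrow> \<Phi> k = \<Psi> k"
proof (induction "mabs m k" arbitrary: k rule: less_induct)
  case less
  have kI: "k \<in> multi_idx m" using less.prems unfolding Kset_def by simp
  have pt: "\<Phi> k \<alpha> p = \<Psi> k \<alpha> p" for \<alpha> p
  proof -
    have rest: "(\<Sum>k'\<in>Kset m q - {k}. eps m k' (\<Phi> k') \<alpha> k p) = (\<Sum>k'\<in>Kset m q - {k}. eps m k' (\<Psi> k') \<alpha> k p)"
    proof (rule sum.cong[OF refl])
      fix k' assume k': "k' \<in> Kset m q - {k}"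
      show "eps m k' (\<Phi> k') \<alpha> k p = eps m k' (\<Psi> k') \<alpha> k p"
      proof (cases "mle m k' k")
        case True
        hence "mabs m k' < mabs m k" using k' kI by (intro mle_mabs_less) (auto simp: Kset_def)
        hence "\<Phi> k' = \<Psi> k'" using less.hyps k' by simp
        thus ?thesis by simp
      next
        case False thus ?thesis unfolding eps_def by simp
      qed
    qed
    have "eps_sum m q \<Phi> \<alpha> k p = eps_sum m q \<Psi> \<alpha> k p" using eq by simp
    thus "\<Phi> k \<alpha> p = \<Psi> k \<alpha> p"
      by (simp add: eps_sum_split[OF less.prems] rest eps_diag[OF kI])
  qed
  thus ?case by (intro ext)
qed

theorem mainTheorem17:
  fixes m :: nat
  assumes "m \<ge> 1"
  shows "\<forall>q::nat.
     (Ecal m q :: ('a::finite, 'f::real_normed_field) vfield set)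
        = eps_sum m q ` {\<Phi>. \<forall>k \<alpha>. \<Phi> k \<alpha> \<in> Aalg m}
     \<and> (\<forall>\<Phi> \<Psi>. (\<forall>k \<alpha>. \<Phi> k \<alpha> \<in> Aalg m) \<longrightarrow> (\<forall>k \<alpha>. \<Psi> k \<alpha> \<in> Aalg m) \<longrightarrow>
           eps_sum m q \<Phi> = (eps_sum m q \<Psi> :: ('a, 'f) vfield) \<longrightarrow>
           (\<forall>k\<in>Kset m q. \<Phi> k = \<Psi> k))"
proof (rule allI, rule conjI)
  fix q :: nat
  show "\<forall>\<Phi> \<Psi>. (\<forall>k \<alpha>. \<Phi> k \<alpha> \<in> Aalg m) \<longrightarrow> (\<forall>k \<alpha>. \<Psi> k \<alpha> \<in> Aalg m) \<longrightarrow>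
           eps_sum m q \<Phi> = (eps_sum m q \<Psi> :: ('a, 'f) vfield) \<longrightarrow>
           (\<forall>k\<in>Kset m q. \<Phi> k = \<Psi> k)"
    using uniq by blast
  show "(Ecal m q :: ('a::finite, 'f::real_normed_field) vfield set) = eps_sum m q ` {\<Phi>. \<forall>k \<alpha>. \<Phi> k \<alpha> \<in> Aalg m}"
  proof
    show "eps_sum m q ` {\<Phi>. \<forall>k \<alpha>. \<Phi> k \<alpha> \<in> Aalg m} \<subseteq> Ecal m q"
      using eps_sum_Ecal by blast
    show "Ecal m q \<subseteq> eps_sum m q ` {\<Phi>. \<forall>k \<alpha>. \<Phi> k \<alpha> \<in> Aalg m}"
    proof
      fix \<zeta> assume z: "\<zeta> \<in> Ecal m q"
      hence zE: "\<zeta> \<in> Epre m (Suc q)" unfolding Ecal_def .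
      hence zV: "\<zeta> \<in> VD m" by simp
      obtain \<Phi> where A: "\<forall>k \<alpha>. \<Phi> k \<alpha> \<in> Aalg m"
        and E: "\<forall>\<alpha> i. i \<in> multi_idx m \<longrightarrow> mabs m i < Suc q \<longrightarrow> eps_sum m q \<Phi> \<alpha> i = \<zeta> \<alpha> i"
        using construct[OF zV, of "Suc q" q] by auto
      have sE: "eps_sum m q \<Phi> \<in> Epre m (Suc q)" using eps_sum_Ecal[OF A] unfolding Ecal_def .
      have h0: "(\<lambda>\<alpha> i p. \<zeta> \<alpha> i p - eps_sum m q \<Phi> \<alpha> i p) = (\<lambda>\<alpha> i p. 0)"
      proof (rule vanish[OF Epre_diff[OF zE sE]])
        fix \<alpha> i assume "i \<in> multi_idx m" "mabs m i < Suc q"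
        thus "(\<lambda>p. \<zeta> \<alpha> i p - eps_sum m q \<Phi> \<alpha> i p) = (\<lambda>_. 0)" using E by simp
      qed
      have pt: "\<zeta> \<alpha> i p = eps_sum m q \<Phi> \<alpha> i p" for \<alpha> i p
          using fun_cong[OF fun_cong[OF fun_cong[OF h0, of \<alpha>], of i], of p] by simp
      hence "\<zeta> = eps_sum m q \<Phi>" by (intro ext)
      thus "\<zeta> \<in> eps_sum m q ` {\<Phi>. \<forall>k \<alpha>. \<Phi> k \<alpha> \<in> Aalg m}" using A by blast
    qed
  qed
qed

end
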